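(* For any $\Gamma\vdash t:A$ and $\Gamma\vdash u:A$ in the full simply-typed $\lambda$-calculus, if $t\approx_{ctx}u$ then $t\approx_{sem}u$.
   Context: Types: $A,B ::= X \mid A\to B \mid A_1\times A_2 \mid 1 \mid A_1+A_2 \mid 0$ ($X$ atomic). Terms: $x \mid \lambda x.t \mid t\,u \mid (t_1,t_2) \mid \pi_i t \mid () \mid \sigma_i t \mid \mathtt{match}\ t\ \mathtt{with}\ (\sigma_1 x_1\to u_1 \mid \sigma_2 x_2\to u_2) \mid \mathtt{absurd}(t)$ with standard simple typing; $\mathtt{absurd}(t):A$ for any $A$ when $t:0$. $\beta$-equivalence $\equiv_\beta$ is the congruence generated by $(\lambda x.t)u\equiv t[u/x]$, $\pi_i(t_1,t_2)\equiv t_i$, $\mathtt{match}\ \sigma_jt\ \mathtt{with}\ (\sigma_ix_i\to u_i)_i\equiv u_j[t/x_j]$. A closed type contains no atoms; a model $M$ maps atoms to closed types and $M(\cdot)$ substitutes. Contextual equivalence: $t\approx_{ctx}u$ iff for every model $M$ and every one-hole context $C$ with $\emptyset\vdash C[M(\Gamma)\vdash\square:M(A)]:1+1$, $C[M(t)]\equiv_\beta C[M(u)]$. Semantics: closed types denote sets ($[\![A\to B]\!]$ total functions, $[\![A\times B]\!]$ product, $[\![1]\!]=\{\star\}$, $[\![A+B]\!]=\{(1,a)\}\uplus\{(2,b)\}$, $[\![0]\!]=\emptyset$), $[\![A]\!]_M=[\![M(A)]\!]$, valuations $\rho\in[\![\Gamma]\!]_M$ map each $x:A\in\Gamma$ into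 $[\![A]\!]_M$, and $[\![t]\!]_M:[\![\Gamma]\!]_M\to[\![A]\!]_M$ is the standard set-theoretic interpretation. Semantic equivalence: $t\approx_{sem}u$ iff for all models $M$ and all $\rho\in[\![\Gamma]\!]_M$, $[\![t]\!]_M(\rho)=[\![u]\!]_M(\rho)$. *)

theory Defs
  imports Main "HOL-Library.FSet"
begin

datatype ty = Atom nat | Arr ty ty | Prod ty ty | One | Sum ty ty | Zero

primrec closed :: "ty \<Rightarrow> bool" where
  "closed (Atom X) = False"
| "closed (Arr A B) = (closed A \<and> closed B)"
| "closed (Prod A B) = (closed A \<and> closed B)"
| "closed One = True"
| "closed (Sum A B) = (closed A \<and> closed B)"
| "closed Zero = True"

definition model :: "(nat \<Rightarrow> ty) \<Rightarrow> bool" where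
  "model M \<longleftrightarrow> (\<forall>X. closed (M X))"

primrec tsubst :: "(nat \<Rightarrow> ty) \<Rightarrow> ty \<Rightarrow> ty" where
  "tsubst M (Atom X) = M X"
| "tsubst M (Arr A B) = Arr (tsubst M A) (tsubst M B)"
| "tsubst M (Prod A B) = Prod (tsubst M A) (tsubst M B)"
| "tsubst M One = One"
| "tsubst M (Sum A B) = Sum (tsubst M A) (tsubst M B)"
| "tsubst M Zero = Zero"

section \<open>Terms (de Bruijn indices; lambda carries the type of its binder)\<close>

datatype trm =
    Var nat
  | Lam ty trm
  | App trm trm
  | Pair trm trm
  | Fst trm
  | Snd trm
  | Unit
  | Inl trm
  | Inr trm
  | Match trm trm trm   \<comment> \<open>match t with (Inl x1 -> u1 | Inr x2 -> u2); u1,u2 bind index 0\<close>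
  | Absurd trm

primrec msubst :: "(nat \<Rightarrow> ty) \<Rightarrow> trm \<Rightarrow> trm" where
  "msubst M (Var i) = Var i"
| "msubst M (Lam A t) = Lam (tsubst M A) (msubst M t)"
| "msubst M (App t u) = App (msubst M t) (msubst M u)"
| "msubst M (Pair t u) = Pair (msubst M t) (msubst M u)"
| "msubst M (Fst t) = Fst (msubst M t)"
| "msubst M (Snd t) = Snd (msubst M t)"
| "msubst M Unit = Unit"
| "msubst M (Inl t) = Inl (msubst M t)"
| "msubst M (Inr t) = Inr (msubst M t)"
| "msubst M (Match t u1 u2) = Match (msubst M t) (msubst M u1) (msubst M u2)"
| "msubst M (Absurd t) = Absurd (msubst M t)"

primrec lift :: "trm \<Rightarrow> nat \<Rightarrow> trm" where
  "lift (Var i) k = (if i < k then Var i else Var (Suc i))"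
| "lift (Lam A t) k = Lam A (lift t (Suc k))"
| "lift (App t u) k = App (lift t k) (lift u k)"
| "lift (Pair t u) k = Pair (lift t k) (lift u k)"
| "lift (Fst t) k = Fst (lift t k)"
| "lift (Snd t) k = Snd (lift t k)"
| "lift Unit k = Unit"
| "lift (Inl t) k = Inl (lift t k)"
| "lift (Inr t) k = Inr (lift t k)"
| "lift (Match t u1 u2) k = Match (lift t k) (lift u1 (Suc k)) (lift u2 (Suc k))"
| "lift (Absurd t) k = Absurd (lift t k)"

text \<open>subst t s k = t[s/k] (capture-avoiding, removing index k).\<close>
primrec subst :: "trm \<Rightarrow> trm \<Rightarrow> nat \<Rightarrow> trm" where
  "subst (Var i) s k = (if k < i then Var (i - 1) else if i = k then s else Var i)"
| "subst (Lam A t) s k = Lam A (subst t (lift s 0) (Suc k))"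
| "subst (App t u) s k = App (subst t s k) (subst u s k)"
| "subst (Pair t u) s k = Pair (subst t s k) (subst u s k)"
| "subst (Fst t) s k = Fst (subst t s k)"
| "subst (Snd t) s k = Snd (subst t s k)"
| "subst Unit s k = Unit"
| "subst (Inl t) s k = Inl (subst t s k)"
| "subst (Inr t) s k = Inr (subst t s k)"
| "subst (Match t u1 u2) s k =
     Match (subst t s k) (subst u1 (lift s 0) (Suc k)) (subst u2 (lift s 0) (Suc k))"
| "subst (Absurd t) s k = Absurd (subst t s k)"

inductive typing :: "ty list \<Rightarrow> trm \<Rightarrow> ty \<Rightarrow> bool" where
  T_Var: "i < length \<Gamma> \<Longrightarrow> \<Gamma> ! i = A \<Longrightarrow> typing \<Gamma> (Var i) A"
| T_Lam: "typing (A # \<Gamma>) t B \<Longrightarrow> typing \<Gamma> (Lam A t) (Arr A B)"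
| T_App: "typing \<Gamma> t (Arr A B) \<Longrightarrow> typing \<Gamma> u A \<Longrightarrow> typing \<Gamma> (App t u) B"
| T_Pair: "typing \<Gamma> t A \<Longrightarrow> typing \<Gamma> u B \<Longrightarrow> typing \<Gamma> (Pair t u) (Prod A B)"
| T_Fst: "typing \<Gamma> t (Prod A B) \<Longrightarrow> typing \<Gamma> (Fst t) A"
| T_Snd: "typing \<Gamma> t (Prod A B) \<Longrightarrow> typing \<Gamma> (Snd t) B"
| T_Unit: "typing \<Gamma> Unit One"
| T_Inl: "typing \<Gamma> t A \<Longrightarrow> typing \<Gamma> (Inl t) (Sum A B)"
| T_Inr: "typing \<Gamma> t B \<Longrightarrow> typing \<Gamma> (Inr t) (Sum A B)"
| T_Match: "typing \<Gamma> t (Sum A1 A2) \<Longrightarrow> typing (A1 # \<Gamma>) u1 C \<Longrightarrow> typing (A2 # \<Gamma>) u2 C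
             \<Longrightarrow> typing \<Gamma> (Match t u1 u2) C"
| T_Absurd: "typing \<Gamma> t Zero \<Longrightarrow> typing \<Gamma> (Absurd t) A"

inductive beta :: "trm \<Rightarrow> trm \<Rightarrow> bool" where
  b_Lam: "beta (App (Lam A t) u) (subst t u 0)"
| b_Fst: "beta (Fst (Pair t1 t2)) t1"
| b_Snd: "beta (Snd (Pair t1 t2)) t2"
| b_Inl: "beta (Match (Inl t) u1 u2) (subst u1 t 0)"
| b_Inr: "beta (Match (Inr t) u1 u2) (subst u2 t 0)"
| c_Lam: "beta t t' \<Longrightarrow> beta (Lam A t) (Lam A t')"
| c_AppL: "beta t t' \<Longrightarrow> beta (App t u) (App t' u)"
| c_AppR: "beta u u' \<Longrightarrow> beta (App t u) (App t u')"
| c_PairL: "beta t t' \<Longrightarrow> beta (Pair t u) (Pair t' u)"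
| c_PairR: "beta u u' \<Longrightarrow> beta (Pair t u) (Pair t u')"
| c_Fst: "beta t t' \<Longrightarrow> beta (Fst t) (Fst t')"
| c_Snd: "beta t t' \<Longrightarrow> beta (Snd t) (Snd t')"
| c_Inl: "beta t t' \<Longrightarrow> beta (Inl t) (Inl t')"
| c_Inr: "beta t t' \<Longrightarrow> beta (Inr t) (Inr t')"
| c_Match0: "beta t t' \<Longrightarrow> beta (Match t u1 u2) (Match t' u1 u2)"
| c_Match1: "beta u1 u1' \<Longrightarrow> beta (Match t u1 u2) (Match t u1' u2)"
| c_Match2: "beta u2 u2' \<Longrightarrow> beta (Match t u1 u2) (Match t u1 u2')"
| c_Absurd: "beta t t' \<Longrightarrow> beta (Absurd t) (Absurd t')"

definition beq :: "trm \<Rightarrow> trm \<Rightarrow> bool" where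
  "beq = (sup beta beta\<inverse>\<inverse>)\<^sup>*\<^sup>*"

datatype ctx =
    Hole
  | CLam ty ctx
  | CAppL ctx trm | CAppR trm ctx
  | CPairL ctx trm | CPairR trm ctx
  | CFst ctx | CSnd ctx
  | CInl ctx | CInr ctx
  | CMatch0 ctx trm trm | CMatch1 trm ctx trm | CMatch2 trm trm ctx
  | CAbsurd ctx

text \<open>Plugging is literal (binders of the context capture the hole's free variables).\<close>
primrec plug :: "ctx \<Rightarrow> trm \<Rightarrow> trm" where
  "plug Hole s = s"
| "plug (CLam A C) s = Lam A (plug C s)"
| "plug (CAppL C u) s = App (plug C s) u"
| "plug (CAppR t C) s = App t (plug C s)"
| "plug (CPairL C u) s = Pair (plug C s) u"
| "plug (CPairR t C) s = Pair t (plug C s)"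
| "plug (CFst C) s = Fst (plug C s)"
| "plug (CSnd C) s = Snd (plug C s)"
| "plug (CInl C) s = Inl (plug C s)"
| "plug (CInr C) s = Inr (plug C s)"
| "plug (CMatch0 C u1 u2) s = Match (plug C s) u1 u2"
| "plug (CMatch1 t C u2) s = Match t (plug C s) u2"
| "plug (CMatch2 t u1 C) s = Match t u1 (plug C s)"
| "plug (CAbsurd C) s = Absurd (plug C s)"

text \<open>ctyping D C G A B  means  D |- C[G |- hole : A] : B.\<close>
inductive ctyping :: "ty list \<Rightarrow> ctx \<Rightarrow> ty list \<Rightarrow> ty \<Rightarrow> ty \<Rightarrow> bool" where
  CT_Hole: "ctyping \<Gamma> Hole \<Gamma> A A"
| CT_Lam: "ctyping (A' # \<Delta>) C \<Gamma> A B \<Longrightarrow> ctyping \<Delta> (CLam A' C) \<Gamma> A (Arr A' B)"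
| CT_AppL: "ctyping \<Delta> C \<Gamma> A (Arr B1 B2) \<Longrightarrow> typing \<Delta> u B1 \<Longrightarrow> ctyping \<Delta> (CAppL C u) \<Gamma> A B2"
| CT_AppR: "typing \<Delta> t (Arr B1 B2) \<Longrightarrow> ctyping \<Delta> C \<Gamma> A B1 \<Longrightarrow> ctyping \<Delta> (CAppR t C) \<Gamma> A B2"
| CT_PairL: "ctyping \<Delta> C \<Gamma> A B1 \<Longrightarrow> typing \<Delta> u B2 \<Longrightarrow> ctyping \<Delta> (CPairL C u) \<Gamma> A (Prod B1 B2)"
| CT_PairR: "typing \<Delta> t B1 \<Longrightarrow> ctyping \<Delta> C \<Gamma> A B2 \<Longrightarrow> ctyping \<Delta> (CPairR t C) \<Gamma> A (Prod B1 B2)"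
| CT_Fst: "ctyping \<Delta> C \<Gamma> A (Prod B1 B2) \<Longrightarrow> ctyping \<Delta> (CFst C) \<Gamma> A B1"
| CT_Snd: "ctyping \<Delta> C \<Gamma> A (Prod B1 B2) \<Longrightarrow> ctyping \<Delta> (CSnd C) \<Gamma> A B2"
| CT_Inl: "ctyping \<Delta> C \<Gamma> A B1 \<Longrightarrow> ctyping \<Delta> (CInl C) \<Gamma> A (Sum B1 B2)"
| CT_Inr: "ctyping \<Delta> C \<Gamma> A B2 \<Longrightarrow> ctyping \<Delta> (CInr C) \<Gamma> A (Sum B1 B2)"
| CT_Match0: "ctyping \<Delta> C \<Gamma> A (Sum B1 B2) \<Longrightarrow> typing (B1 # \<Delta>) u1 D \<Longrightarrow> typing (B2 # \<Delta>) u2 D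
              \<Longrightarrow> ctyping \<Delta> (CMatch0 C u1 u2) \<Gamma> A D"
| CT_Match1: "typing \<Delta> t (Sum B1 B2) \<Longrightarrow> ctyping (B1 # \<Delta>) C \<Gamma> A D \<Longrightarrow> typing (B2 # \<Delta>) u2 D
              \<Longrightarrow> ctyping \<Delta> (CMatch1 t C u2) \<Gamma> A D"
| CT_Match2: "typing \<Delta> t (Sum B1 B2) \<Longrightarrow> typing (B1 # \<Delta>) u1 D \<Longrightarrow> ctyping (B2 # \<Delta>) C \<Gamma> A D
              \<Longrightarrow> ctyping \<Delta> (CMatch2 t u1 C) \<Gamma> A D"
| CT_Absurd: "ctyping \<Delta> C \<Gamma> A Zero \<Longrightarrow> ctyping \<Delta> (CAbsurd C) \<Gamma> A B"

definition ctx_equiv :: "ty list \<Rightarrow> trm \<Rightarrow> trm \<Rightarrow> ty \<Rightarrow> bool" where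
  "ctx_equiv \<Gamma> t u A \<longleftrightarrow>
     (\<forall>M C. model M \<longrightarrow>
        ctyping [] C (map (tsubst M) \<Gamma>) (tsubst M A) (Sum One One) \<longrightarrow>
        beq (plug C (msubst M t)) (plug C (msubst M u)))"

text \<open>Universal value domain; a (total) function between the finite sets denoted by
  closed types is represented by its graph.\<close>
datatype val = VUnit | VPair val val | VInl val | VInr val | VFun "(val \<times> val) fset"

primrec dom :: "ty \<Rightarrow> val set" where
  "dom (Atom X) = {}"
| "dom (Arr A B) = {VFun g | g. fst ` fset g = dom A \<and> snd ` fset g \<subseteq> dom B
                              \<and> (\<forall>a b b'. (a, b) \<in> fset g \<longrightarrow> (a, b') \<in> fset g \<longrightarrow> b = b')}"
| "dom (Prod A B) = {VPair a b | a b. a \<in> dom A \<and> b \<in> dom B}"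
| "dom One = {VUnit}"
| "dom (Sum A B) = VInl ` dom A \<union> VInr ` dom B"
| "dom Zero = {}"

fun vapp :: "val \<Rightarrow> val \<Rightarrow> val" where
  "vapp (VFun g) a = (THE b. (a, b) \<in> fset g)"
| "vapp _ a = undefined"

fun vfst :: "val \<Rightarrow> val" where
  "vfst (VPair a b) = a"
| "vfst _ = undefined"

fun vsnd :: "val \<Rightarrow> val" where
  "vsnd (VPair a b) = b"
| "vsnd _ = undefined"

primrec sem :: "(nat \<Rightarrow> ty) \<Rightarrow> trm \<Rightarrow> val list \<Rightarrow> val" where
  "sem M (Var i) \<rho> = \<rho> ! i"
| "sem M (Lam A t) \<rho> = VFun (Abs_fset ((\<lambda>a. (a, sem M t (a # \<rho>))) ` dom (tsubst M A)))"
| "sem M (App t u) \<rho> = vapp (sem M t \<rho>) (sem M u \<rho>)"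
| "sem M (Pair t u) \<rho> = VPair (sem M t \<rho>) (sem M u \<rho>)"
| "sem M (Fst t) \<rho> = vfst (sem M t \<rho>)"
| "sem M (Snd t) \<rho> = vsnd (sem M t \<rho>)"
| "sem M Unit \<rho> = VUnit"
| "sem M (Inl t) \<rho> = VInl (sem M t \<rho>)"
| "sem M (Inr t) \<rho> = VInr (sem M t \<rho>)"
| "sem M (Match t u1 u2) \<rho> =
     (case sem M t \<rho> of VInl v \<Rightarrow> sem M u1 (v # \<rho>)
                       | VInr v \<Rightarrow> sem M u2 (v # \<rho>)
                       | _ \<Rightarrow> undefined)"
| "sem M (Absurd t) \<rho> = undefined"

definition env_dom :: "(nat \<Rightarrow> ty) \<Rightarrow> ty list \<Rightarrow> val list set" where
  "env_dom M \<Gamma> = {\<rho>. length \<rho> = length \<Gamma> \<and> (\<forall>i < length \<Gamma>. \<rho> ! i \<in> dom (tsubst M (\<Gamma> ! i)))}"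

definition sem_equiv :: "ty list \<Rightarrow> trm \<Rightarrow> trm \<Rightarrow> bool" where
  "sem_equiv \<Gamma> t u \<longleftrightarrow>
     (\<forall>M \<rho>. model M \<longrightarrow> \<rho> \<in> env_dom M \<Gamma> \<longrightarrow> sem M t \<rho> = sem M u \<rho>)"

end

theory Submission
  imports Defs
begin

section \<open>Substitution lemmas\<close>

lemma lift_lift:
    "i < k + 1 \<Longrightarrow> lift (lift t i) (Suc k) = lift (lift t k) i"
  by (induct t arbitrary: i k) auto

lemma lift_subst [simp]:
    "j < i + 1 \<Longrightarrow> lift (subst t s j) i = subst (lift t (i + 1)) (lift s i) j"
  by (induct t arbitrary: i j s)
    (simp_all add: diff_Suc lift_lift split: nat.split)

lemma lift_subst_lt:
    "i < j + 1 \<Longrightarrow> lift (subst t s j) i = subst (lift t i) (lift s i) (j + 1)"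
  by (induct t arbitrary: i j s) (auto simp add: lift_lift)

lemma subst_lift [simp]:
    "subst (lift t k) s k = t"
  by (induct t arbitrary: k s) simp_all

lemma subst_subst:
    "i < j + 1 \<Longrightarrow> subst (subst t (lift v i) (Suc j)) (subst u v j) i = subst (subst t u i) v j"
  by (induct t arbitrary: i j u v)
    (simp_all add: diff_Suc lift_lift [symmetric] lift_subst_lt
      split: nat.split)

section \<open>Parallel reduction and confluence\<close>

inductive par :: "trm \<Rightarrow> trm \<Rightarrow> bool" where
  p_Var: "par (Var i) (Var i)"
| p_Unit: "par Unit Unit"
| p_Lam: "par t t' \<Longrightarrow> par (Lam A t) (Lam A t')"
| p_App: "par t t' \<Longrightarrow> par u u' \<Longrightarrow> par (App t u) (App t' u')"
| p_Pair: "par t t' \<Longrightarrow> par u u' \<Longrightarrow> par (Pair t u) (Pair t' u')"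
| p_Fst: "par t t' \<Longrightarrow> par (Fst t) (Fst t')"
| p_Snd: "par t t' \<Longrightarrow> par (Snd t) (Snd t')"
| p_Inl: "par t t' \<Longrightarrow> par (Inl t) (Inl t')"
| p_Inr: "par t t' \<Longrightarrow> par (Inr t) (Inr t')"
| p_Match: "par t t' \<Longrightarrow> par u1 u1' \<Longrightarrow> par u2 u2' \<Longrightarrow> par (Match t u1 u2) (Match t' u1' u2')"
| p_Absurd: "par t t' \<Longrightarrow> par (Absurd t) (Absurd t')"
| p_beta: "par t t' \<Longrightarrow> par u u' \<Longrightarrow> par (App (Lam A t) u) (subst t' u' 0)"
| p_fst: "par t1 t1' \<Longrightarrow> par (Fst (Pair t1 t2)) t1'"
| p_snd: "par t2 t2' \<Longrightarrow> par (Snd (Pair t1 t2)) t2'"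
| p_inl: "par t t' \<Longrightarrow> par u1 u1' \<Longrightarrow> par (Match (Inl t) u1 u2) (subst u1' t' 0)"
| p_inr: "par t t' \<Longrightarrow> par u2 u2' \<Longrightarrow> par (Match (Inr t) u1 u2) (subst u2' t' 0)"

inductive_simps par_Lam_simp: "par (Lam A t) s"
inductive_simps par_Pair_simp: "par (Pair t u) s"
inductive_simps par_Inl_simp: "par (Inl t) s"
inductive_simps par_Inr_simp: "par (Inr t) s"

lemma par_refl [simp, intro]: "par t t"
  by (induct t) (auto intro: par.intros)

lemma par_lift: "par t t' \<Longrightarrow> par (lift t k) (lift t' k)"
proof (induct arbitrary: k rule: par.induct)
  case (p_beta t t' u u' A)
  then show ?case using par.p_beta[of "lift t (Suc k)" "lift t' (Suc k)" "lift u k" "lift u' k" A]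
    by simp
next
  case (p_inl t t' u1 u1' u2)
  then show ?case using par.p_inl[of "lift t k" "lift t' k" "lift u1 (Suc k)" "lift u1' (Suc k)" "lift u2 (Suc k)"]
    by simp
next
  case (p_inr t t' u2 u2' u1)
  then show ?case using par.p_inr[of "lift t k" "lift t' k" "lift u2 (Suc k)" "lift u2' (Suc k)" "lift u1 (Suc k)"]
    by simp
qed (auto intro: par.intros)

lemma par_subst: "par t t' \<Longrightarrow> par s s' \<Longrightarrow> par (subst t s k) (subst t' s' k)"
proof (induct arbitrary: s s' k rule: par.induct)
  case (p_beta t t' u u' A)
  have l: "par (lift s 0) (lift s' 0)" using p_beta(5) by (rule par_lift)
  have "par (App (Lam A (subst t (lift s 0) (Suc k))) (subst u s k))
            (subst (subst t' (lift s' 0) (Suc k)) (subst u' s' k) 0)"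
    by (rule par.p_beta) (rule p_beta(2)[OF l], rule p_beta(4)[OF p_beta(5)])
  then show ?case using subst_subst[of 0 k t' s' u'] by simp
next
  case (p_inl t t' u1 u1' u2)
  have l: "par (lift s 0) (lift s' 0)" using p_inl(5) by (rule par_lift)
  have "par (Match (Inl (subst t s k)) (subst u1 (lift s 0) (Suc k)) (subst u2 (lift s 0) (Suc k)))
            (subst (subst u1' (lift s' 0) (Suc k)) (subst t' s' k) 0)"
    by (rule par.p_inl) (rule p_inl(2)[OF p_inl(5)], rule p_inl(4)[OF l])
  then show ?case using subst_subst[of 0 k u1' s' t'] by simp
next
  case (p_inr t t' u2 u2' u1)
  have l: "par (lift s 0) (lift s' 0)" using p_inr(5) by (rule par_lift)
  have "par (Match (Inr (subst t s k)) (subst u1 (lift s 0) (Suc k)) (subst u2 (lift s 0) (Suc k)))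
            (subst (subst u2' (lift s' 0) (Suc k)) (subst t' s' k) 0)"
    by (rule par.p_inr) (rule p_inr(2)[OF p_inr(5)], rule p_inr(4)[OF l])
  then show ?case using subst_subst[of 0 k u2' s' t'] by simp
next
  case (p_Var i)
  then show ?case by simp
next
  case (p_Lam t t' A)
  then show ?case by (simp add: par.p_Lam par_lift)
next
  case (p_Match t t' u1 u1' u2 u2')
  then show ?case by (simp add: par.p_Match par_lift)
qed (simp_all add: par.intros)

definition capp :: "trm \<Rightarrow> trm \<Rightarrow> trm \<Rightarrow> trm" where
  "capp t ct cu = (case t of Lam A b \<Rightarrow> (case ct of Lam A' cb \<Rightarrow> subst cb cu 0 | _ \<Rightarrow> App ct cu)
                   | _ \<Rightarrow> App ct cu)"

definition cfst :: "trm \<Rightarrow> trm \<Rightarrow> trm" where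
  "cfst t ct = (case t of Pair a b \<Rightarrow> (case ct of Pair ca cb \<Rightarrow> ca | _ \<Rightarrow> Fst ct) | _ \<Rightarrow> Fst ct)"

definition csnd :: "trm \<Rightarrow> trm \<Rightarrow> trm" where
  "csnd t ct = (case t of Pair a b \<Rightarrow> (case ct of Pair ca cb \<Rightarrow> cb | _ \<Rightarrow> Snd ct) | _ \<Rightarrow> Snd ct)"

definition cmatch :: "trm \<Rightarrow> trm \<Rightarrow> trm \<Rightarrow> trm \<Rightarrow> trm" where
  "cmatch t ct cu1 cu2 = (case t of
       Inl a \<Rightarrow> (case ct of Inl ca \<Rightarrow> subst cu1 ca 0 | _ \<Rightarrow> Match ct cu1 cu2)
     | Inr a \<Rightarrow> (case ct of Inr ca \<Rightarrow> subst cu2 ca 0 | _ \<Rightarrow> Match ct cu1 cu2)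
     | _ \<Rightarrow> Match ct cu1 cu2)"

primrec cd :: "trm \<Rightarrow> trm" where
  "cd (Var i) = Var i"
| "cd (Lam A t) = Lam A (cd t)"
| "cd (App t u) = capp t (cd t) (cd u)"
| "cd (Pair t u) = Pair (cd t) (cd u)"
| "cd (Fst t) = cfst t (cd t)"
| "cd (Snd t) = csnd t (cd t)"
| "cd Unit = Unit"
| "cd (Inl t) = Inl (cd t)"
| "cd (Inr t) = Inr (cd t)"
| "cd (Match t u1 u2) = cmatch t (cd t) (cd u1) (cd u2)"
| "cd (Absurd t) = Absurd (cd t)"

lemma cd_App_Lam [simp]: "cd (App (Lam A b) u) = subst (cd b) (cd u) 0"
  by (simp add: capp_def)
lemma cd_App_nLam: "\<forall>A b. t \<noteq> Lam A b \<Longrightarrow> cd (App t u) = App (cd t) (cd u)"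
  by (cases t) (auto simp: capp_def)
lemma cd_Fst_Pair [simp]: "cd (Fst (Pair a b)) = cd a"
  by (simp add: cfst_def)
lemma cd_Fst_nPair: "\<forall>a b. t \<noteq> Pair a b \<Longrightarrow> cd (Fst t) = Fst (cd t)"
  by (cases t) (auto simp: cfst_def)
lemma cd_Snd_Pair [simp]: "cd (Snd (Pair a b)) = cd b"
  by (simp add: csnd_def)
lemma cd_Snd_nPair: "\<forall>a b. t \<noteq> Pair a b \<Longrightarrow> cd (Snd t) = Snd (cd t)"
  by (cases t) (auto simp: csnd_def)
lemma cd_Match_Inl [simp]: "cd (Match (Inl a) u1 u2) = subst (cd u1) (cd a) 0"
  by (simp add: cmatch_def)
lemma cd_Match_Inr [simp]: "cd (Match (Inr a) u1 u2) = subst (cd u2) (cd a) 0"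
  by (simp add: cmatch_def)
lemma cd_Match_n: "\<forall>a. t \<noteq> Inl a \<Longrightarrow> \<forall>a. t \<noteq> Inr a \<Longrightarrow> cd (Match t u1 u2) = Match (cd t) (cd u1) (cd u2)"
  by (cases t) (auto simp: cmatch_def)

declare cd.simps(3,5,6,10) [simp del]

lemma par_cd: "par t t' \<Longrightarrow> par t' (cd t)"
proof (induct rule: par.induct)
  case (p_App t t' u u')
  show ?case
  proof (cases "\<exists>A b. t = Lam A b")
    case True
    then obtain A b where tb: "t = Lam A b" by blast
    with p_App(1) obtain b' where "t' = Lam A b'" "par b b'" by (auto simp: par_Lam_simp)
    moreover have "par b' (cd b)" using p_App(2) tb calculation by (simp add: par_Lam_simp)
    ultimately show ?thesis using tb p_App(4) by (simp add: par.p_beta)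
  next
    case False
    then show ?thesis using p_App by (simp add: cd_App_nLam par.p_App)
  qed
next
  case (p_Fst t t')
  show ?case
  proof (cases "\<exists>a b. t = Pair a b")
    case True
    then obtain a b where tb: "t = Pair a b" by blast
    with p_Fst(1) obtain a' b' where "t' = Pair a' b'" "par a a'" by (auto simp: par_Pair_simp)
    moreover have "par a' (cd a)" using p_Fst(2) tb calculation by (simp add: par_Pair_simp)
    ultimately show ?thesis using tb by (simp add: par.p_fst)
  next
    case False
    then show ?thesis using p_Fst by (simp add: cd_Fst_nPair par.p_Fst)
  qed
next
  case (p_Snd t t')
  show ?case
  proof (cases "\<exists>a b. t = Pair a b")
    case True
    then obtain a b where tb: "t = Pair a b" by blast
    with p_Snd(1) obtain a' b' where "t' = Pair a' b'" "par b b'" by (auto simp: par_Pair_simp)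
    moreover have "par b' (cd b)" using p_Snd(2) tb calculation by (simp add: par_Pair_simp)
    ultimately show ?thesis using tb by (simp add: par.p_snd)
  next
    case False
    then show ?thesis using p_Snd by (simp add: cd_Snd_nPair par.p_Snd)
  qed
next
  case (p_Match t t' u1 u1' u2 u2')
  show ?case
  proof (cases "\<exists>a. t = Inl a")
    case True
    then obtain a where tb: "t = Inl a" by blast
    with p_Match(1) obtain a' where "t' = Inl a'" "par a a'" by (auto simp: par_Inl_simp)
    moreover have "par a' (cd a)" using p_Match(2) tb calculation by (simp add: par_Inl_simp)
    ultimately show ?thesis using tb p_Match(4) by (simp add: par.p_inl)
  next
    case False
    show ?thesis
    proof (cases "\<exists>a. t = Inr a")
      case True
      then obtain a where tb: "t = Inr a" by blast
      with p_Match(1) obtain a' where "t' = Inr a'" "par a a'" by (auto simp: par_Inr_simp)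
      moreover have "par a' (cd a)" using p_Match(2) tb calculation by (simp add: par_Inr_simp)
      ultimately show ?thesis using tb p_Match(6) by (simp add: par.p_inr)
    next
      case False2: False
      then show ?thesis using p_Match False by (simp add: cd_Match_n par.p_Match)
    qed
  qed
next
  case (p_beta t t' u u' A)
  then show ?case by (simp add: par_subst)
next
  case (p_inl t t' u1 u1' u2)
  then show ?case by (simp add: par_subst)
next
  case (p_inr t t' u2 u2' u1)
  then show ?case by (simp add: par_subst)
next
  case (p_fst t1 t1' t2)
  then show ?case by simp
next
  case (p_snd t2 t2' t1)
  then show ?case by simp
qed (simp_all add: par.intros)

lemma par_diamond: "par t t1 \<Longrightarrow> par t t2 \<Longrightarrow> \<exists>s. par t1 s \<and> par t2 s"
  using par_cd by blast

lemma par_strip: "par\<^sup>*\<^sup>* t t2 \<Longrightarrow> par t t1 \<Longrightarrow> \<exists>s. par\<^sup>*\<^sup>* t1 s \<and> par t2 s"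
proof (induct arbitrary: t1 rule: rtranclp_induct)
  case base
  then show ?case by blast
next
  case (step y z)
  then obtain s where "par\<^sup>*\<^sup>* t1 s" "par y s" by blast
  moreover from par_diamond[OF \<open>par y s\<close> \<open>par y z\<close>] obtain s' where "par s s'" "par z s'" by blast
  ultimately show ?case by (meson rtranclp.rtrancl_into_rtrancl)
qed

lemma beta_par: "beta t t' \<Longrightarrow> par t t'"
  by (induct rule: beta.induct) (auto intro: par.intros)

lemma rtc_cong:
  assumes f: "\<And>x y. beta x y \<Longrightarrow> beta (f x) (f y)" and "beta\<^sup>*\<^sup>* x y"
  shows "beta\<^sup>*\<^sup>* (f x) (f y)"
  using assms(2) by induct (auto intro: rtranclp.rtrancl_into_rtrancl f)

lemma par_betas: "par t t' \<Longrightarrow> beta\<^sup>*\<^sup>* t t'"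
proof (induct rule: par.induct)
  case (p_Lam t t' A)
  note prems = this
  show ?case using prems by (intro rtc_cong[where f="Lam A"]) (auto intro: beta.intros)
next
  case (p_App t t' u u')
  note prems = this
  have "beta\<^sup>*\<^sup>* (App t u) (App t' u)" using prems by (intro rtc_cong[where f="\<lambda>x. App x u"]) (auto intro: beta.intros)
  moreover have "beta\<^sup>*\<^sup>* (App t' u) (App t' u')" using prems by (intro rtc_cong[where f="\<lambda>x. App t' x"]) (auto intro: beta.intros)
  ultimately show ?case by (meson rtranclp_trans rtranclp.rtrancl_into_rtrancl)
next
  case (p_Pair t t' u u')
  note prems = this
  have "beta\<^sup>*\<^sup>* (Pair t u) (Pair t' u)" using prems by (intro rtc_cong[where f="\<lambda>x. Pair x u"]) (auto intro: beta.intros)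
  moreover have "beta\<^sup>*\<^sup>* (Pair t' u) (Pair t' u')" using prems by (intro rtc_cong[where f="\<lambda>x. Pair t' x"]) (auto intro: beta.intros)
  ultimately show ?case by (meson rtranclp_trans rtranclp.rtrancl_into_rtrancl)
next
  case (p_Fst t t')
  note prems = this
  show ?case using prems by (intro rtc_cong[where f="Fst"]) (auto intro: beta.intros)
next
  case (p_Snd t t')
  note prems = this
  show ?case using prems by (intro rtc_cong[where f="Snd"]) (auto intro: beta.intros)
next
  case (p_Inl t t')
  note prems = this
  show ?case using prems by (intro rtc_cong[where f="Inl"]) (auto intro: beta.intros)
next
  case (p_Inr t t')
  note prems = this
  show ?case using prems by (intro rtc_cong[where f="Inr"]) (auto intro: beta.intros)
next
  case (p_Absurd t t')
  note prems = this
  show ?case using prems by (intro rtc_cong[where f="Absurd"]) (auto intro: beta.intros)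
next
  case (p_Match t t' u1 u1' u2 u2')
  note prems = this
  have "beta\<^sup>*\<^sup>* (Match t u1 u2) (Match t' u1 u2)" using prems by (intro rtc_cong[where f="\<lambda>x. Match x u1 u2"]) (auto intro: beta.intros)
  moreover have "beta\<^sup>*\<^sup>* (Match t' u1 u2) (Match t' u1' u2)" using prems by (intro rtc_cong[where f="\<lambda>x. Match t' x u2"]) (auto intro: beta.intros)
  moreover have "beta\<^sup>*\<^sup>* (Match t' u1' u2) (Match t' u1' u2')" using prems by (intro rtc_cong[where f="\<lambda>x. Match t' u1' x"]) (auto intro: beta.intros)
  ultimately show ?case by (meson rtranclp_trans rtranclp.rtrancl_into_rtrancl)
next
  case (p_beta t t' u u' A)
  note prems = this
  have "beta\<^sup>*\<^sup>* (App (Lam A t) u) (App (Lam A t') u)" using prems by (intro rtc_cong[where f="\<lambda>x. App (Lam A x) u"]) (auto intro: beta.intros)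
  moreover have "beta\<^sup>*\<^sup>* (App (Lam A t') u) (App (Lam A t') u')" using prems by (intro rtc_cong[where f="\<lambda>x. App (Lam A t') x"]) (auto intro: beta.intros)
  moreover have "beta (App (Lam A t') u') (subst t' u' 0)" by (rule beta.intros)
  ultimately show ?case by (meson rtranclp_trans rtranclp.rtrancl_into_rtrancl)
next
  case (p_fst t1 t1' t2)
  note prems = this
  have "beta\<^sup>*\<^sup>* (Fst (Pair t1 t2)) (Fst (Pair t1' t2))" using prems by (intro rtc_cong[where f="\<lambda>x. Fst (Pair x t2)"]) (auto intro: beta.intros)
  moreover have "beta (Fst (Pair t1' t2)) t1'" by (rule beta.intros)
  ultimately show ?case by (meson rtranclp_trans rtranclp.rtrancl_into_rtrancl)
next
  case (p_snd t2 t2' t1)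
  note prems = this
  have "beta\<^sup>*\<^sup>* (Snd (Pair t1 t2)) (Snd (Pair t1 t2'))" using prems by (intro rtc_cong[where f="\<lambda>x. Snd (Pair t1 x)"]) (auto intro: beta.intros)
  moreover have "beta (Snd (Pair t1 t2')) t2'" by (rule beta.intros)
  ultimately show ?case by (meson rtranclp_trans rtranclp.rtrancl_into_rtrancl)
next
  case (p_inl t t' u1 u1' u2)
  note prems = this
  have "beta\<^sup>*\<^sup>* (Match (Inl t) u1 u2) (Match (Inl t') u1 u2)" using prems by (intro rtc_cong[where f="\<lambda>x. Match (Inl x) u1 u2"]) (auto intro: beta.intros)
  moreover have "beta\<^sup>*\<^sup>* (Match (Inl t') u1 u2) (Match (Inl t') u1' u2)" using prems by (intro rtc_cong[where f="\<lambda>x. Match (Inl t') x u2"]) (auto intro: beta.intros)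
  moreover have "beta (Match (Inl t') u1' u2) (subst u1' t' 0)" by (rule beta.intros)
  ultimately show ?case by (meson rtranclp_trans rtranclp.rtrancl_into_rtrancl)
next
  case (p_inr t t' u2 u2' u1)
  note prems = this
  have "beta\<^sup>*\<^sup>* (Match (Inr t) u1 u2) (Match (Inr t') u1 u2)" using prems by (intro rtc_cong[where f="\<lambda>x. Match (Inr x) u1 u2"]) (auto intro: beta.intros)
  moreover have "beta\<^sup>*\<^sup>* (Match (Inr t') u1 u2) (Match (Inr t') u1 u2')" using prems by (intro rtc_cong[where f="\<lambda>x. Match (Inr t') u1 x"]) (auto intro: beta.intros)
  moreover have "beta (Match (Inr t') u1 u2') (subst u2' t' 0)" by (rule beta.intros)
  ultimately show ?case by (meson rtranclp_trans rtranclp.rtrancl_into_rtrancl)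
qed auto

lemma pars_betas: "par\<^sup>*\<^sup>* t t' \<Longrightarrow> beta\<^sup>*\<^sup>* t t'"
  by (induct rule: rtranclp_induct) (auto dest: par_betas)

lemma church_rosser: "beq a b \<Longrightarrow> \<exists>c. beta\<^sup>*\<^sup>* a c \<and> beta\<^sup>*\<^sup>* b c"
proof -
  assume "beq a b"
  then have "(sup beta beta\<inverse>\<inverse>)\<^sup>*\<^sup>* a b" by (simp add: beq_def)
  then have "\<exists>c. par\<^sup>*\<^sup>* a c \<and> par\<^sup>*\<^sup>* b c"
  proof (induct rule: rtranclp_induct)
    case base
    then show ?case by blast
  next
    case (step y z)
    then obtain c where c: "par\<^sup>*\<^sup>* a c" "par\<^sup>*\<^sup>* y c" by blast
    from step(2) show ?case
    proof
      assume "beta y z"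
      then have "par y z" by (rule beta_par)
      from par_strip[OF c(2) this] obtain s where "par\<^sup>*\<^sup>* z s" "par c s" by blast
      then show ?thesis using c(1) by (meson rtranclp.rtrancl_into_rtrancl)
    next
      assume "beta\<inverse>\<inverse> y z"
      then have "par z y" by (simp add: beta_par)
      then show ?thesis using c by (meson converse_rtranclp_into_rtranclp)
    qed
  qed
  then show ?thesis using pars_betas by blast
qed

section \<open>Typing: weakening, substitution, subject reduction\<close>

inductive_simps typ_Var: "typing \<Gamma> (Var i) A"
inductive_simps typ_Lam: "typing \<Gamma> (Lam B t) A"
inductive_simps typ_App: "typing \<Gamma> (App t u) A"
inductive_simps typ_Pair: "typing \<Gamma> (Pair t u) A"
inductive_simps typ_Fst: "typing \<Gamma> (Fst t) A"
inductive_simps typ_Snd: "typing \<Gamma> (Snd t) A"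
inductive_simps typ_Unit: "typing \<Gamma> Unit A"
inductive_simps typ_Inl: "typing \<Gamma> (Inl t) A"
inductive_simps typ_Inr: "typing \<Gamma> (Inr t) A"
inductive_simps typ_Match: "typing \<Gamma> (Match t u1 u2) A"
inductive_simps typ_Absurd: "typing \<Gamma> (Absurd t) A"

lemmas typ_simps = typ_Var typ_Lam typ_App typ_Pair typ_Fst typ_Snd typ_Unit typ_Inl typ_Inr
  typ_Match typ_Absurd

lemma typing_lift:
  "typing \<Gamma> t A \<Longrightarrow> k \<le> length \<Gamma> \<Longrightarrow> typing (take k \<Gamma> @ B # drop k \<Gamma>) (lift t k) A"
proof (induct arbitrary: k rule: typing.induct)
  case (T_Var i \<Gamma> A)
  then show ?case by (auto simp: nth_append typ_Var min_def)
next
  case (T_Lam A \<Gamma> t C)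
  then have "typing (take (Suc k) (A # \<Gamma>) @ B # drop (Suc k) (A # \<Gamma>)) (lift t (Suc k)) C"
    using T_Lam(2)[of "Suc k"] by simp
  then show ?case by (simp add: typing.T_Lam)
next
  case (T_Match \<Gamma> t A1 A2 u1 C u2)
  then have "typing (take (Suc k) (A1 # \<Gamma>) @ B # drop (Suc k) (A1 # \<Gamma>)) (lift u1 (Suc k)) C"
    "typing (take (Suc k) (A2 # \<Gamma>) @ B # drop (Suc k) (A2 # \<Gamma>)) (lift u2 (Suc k)) C"
    using T_Match(4)[of "Suc k"] T_Match(6)[of "Suc k"] by simp_all
  then show ?case using T_Match by (auto intro: typing.T_Match)
qed (auto intro: typing.intros)

lemma typing_lift0: "typing \<Gamma> t A \<Longrightarrow> typing (B # \<Gamma>) (lift t 0) A"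
  using typing_lift[of \<Gamma> t A 0 B] by simp

lemma lift_closed: "typing \<Gamma> t A \<Longrightarrow> length \<Gamma> \<le> k \<Longrightarrow> lift t k = t"
  by (induct arbitrary: k rule: typing.induct) auto

lemma typing_closed: "typing [] t A \<Longrightarrow> typing \<Gamma> t A"
proof (induct \<Gamma>)
  case Nil
  then show ?case by simp
next
  case (Cons B \<Gamma>)
  then have "typing (B # \<Gamma>) (lift t 0) A" by (simp add: typing_lift0)
  moreover have "lift t 0 = t" using Cons(2) lift_closed by fastforce
  ultimately show ?case by simp
qed

lemma typing_subst:
  "typing \<Gamma>' t A \<Longrightarrow> \<Gamma>' = take k \<Gamma> @ B # drop k \<Gamma> \<Longrightarrow> k \<le> length \<Gamma> \<Longrightarrow> typing \<Gamma> s B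
   \<Longrightarrow> typing \<Gamma> (subst t s k) A"
proof (induct arbitrary: \<Gamma> k s rule: typing.induct)
  case (T_Var i \<Gamma>' A)
  show ?case
  proof (cases "i < k")
    case True
    then show ?thesis using T_Var by (auto simp: nth_append typ_Var min_def)
  next
    case False
    show ?thesis
    proof (cases "i = k")
      case True
      then show ?thesis using T_Var by (auto simp: nth_append min_def)
    next
      case False2: False
      then have "k < i" using False by simp
      then obtain j where j: "i = Suc j" "k \<le> j" by (cases i) auto
      have len: "length \<Gamma>' = Suc (length \<Gamma>)" using T_Var by simp
      have "\<Gamma>' ! i = (B # drop k \<Gamma>) ! (Suc j - k)" using T_Var j by (simp add: nth_append)
      also have "\<dots> = drop k \<Gamma> ! (j - k)" using j by (simp add: Suc_diff_le)
      also have "\<dots> = \<Gamma> ! j" using j T_Var by simp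
      finally have "\<Gamma>' ! i = \<Gamma> ! j" .
      then show ?thesis using T_Var j len by (auto simp: typ_Var)
    qed
  qed
next
  case (T_Lam A \<Gamma>' t C)
  have "typing (A # \<Gamma>) (subst t (lift s 0) (Suc k)) C"
    by (rule T_Lam(2)) (use T_Lam in \<open>auto intro: typing_lift0\<close>)
  then show ?case by (simp add: typing.T_Lam)
next
  case (T_Match \<Gamma>' t A1 A2 u1 C u2)
  have "typing (A1 # \<Gamma>) (subst u1 (lift s 0) (Suc k)) C"
    by (rule T_Match(4)) (use T_Match in \<open>auto intro: typing_lift0\<close>)
  moreover have "typing (A2 # \<Gamma>) (subst u2 (lift s 0) (Suc k)) C"
    by (rule T_Match(6)) (use T_Match in \<open>auto intro: typing_lift0\<close>)
  ultimately show ?case using T_Match by (auto intro: typing.T_Match)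
next
  case (T_App \<Gamma>' t A' B' u)
  then have "typing \<Gamma> (subst t s k) (Arr A' B')" "typing \<Gamma> (subst u s k) A'" by auto
  then show ?case by (simp add: typing.T_App)
next
  case (T_Pair \<Gamma>' t A' u B')
  then have "typing \<Gamma> (subst t s k) A'" "typing \<Gamma> (subst u s k) B'" by auto
  then show ?case by (simp add: typing.T_Pair)
next
  case (T_Fst \<Gamma>' t A' B')
  then have "typing \<Gamma> (subst t s k) (Prod A' B')" by auto
  then show ?case by (simp add: typing.T_Fst)
next
  case (T_Snd \<Gamma>' t A' B')
  then have "typing \<Gamma> (subst t s k) (Prod A' B')" by auto
  then show ?case by (simp add: typing.T_Snd)
next
  case (T_Unit \<Gamma>')
  then show ?case by (simp add: typing.T_Unit)
next
  case (T_Inl \<Gamma>' t A' B')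
  then have "typing \<Gamma> (subst t s k) A'" by auto
  then show ?case by (simp add: typing.T_Inl)
next
  case (T_Inr \<Gamma>' t B' A')
  then have "typing \<Gamma> (subst t s k) B'" by auto
  then show ?case by (simp add: typing.T_Inr)
next
  case (T_Absurd \<Gamma>' t A')
  then have "typing \<Gamma> (subst t s k) Zero" by auto
  then show ?case by (simp add: typing.T_Absurd)
qed

lemma subject_red: "beta t t' \<Longrightarrow> typing \<Gamma> t A \<Longrightarrow> typing \<Gamma> t' A"
proof (induct arbitrary: \<Gamma> A rule: beta.induct)
  case (b_Lam B t u)
  then obtain C where "typing (C # \<Gamma>) t A" "typing \<Gamma> u C" "B = C"
    by (auto simp: typ_App typ_Lam)
  then show ?case by (intro typing_subst[of "C # \<Gamma>" t A 0 \<Gamma> C u]) simp_all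
next
  case (b_Inl t u1 u2)
  then obtain A1 A2 where "typing \<Gamma> t A1" "typing (A1 # \<Gamma>) u1 A"
    by (auto simp: typ_Match typ_Inl)
  then show ?case by (intro typing_subst[of "A1 # \<Gamma>" u1 A 0 \<Gamma> A1 t]) simp_all
next
  case (b_Inr t u1 u2)
  then obtain A1 A2 where "typing \<Gamma> t A2" "typing (A2 # \<Gamma>) u2 A"
    by (auto simp: typ_Match typ_Inr)
  then show ?case by (intro typing_subst[of "A2 # \<Gamma>" u2 A 0 \<Gamma> A2 t]) simp_all
next
  case (b_Fst t1 t2) then show ?case by (auto simp: typ_Fst typ_Pair)
next
  case (b_Snd t1 t2) then show ?case by (auto simp: typ_Snd typ_Pair)
next
  case (c_Lam t t' B) then show ?case by (auto simp: typ_Lam)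
next
  case (c_AppL t t' u) then show ?case by (auto simp: typ_App)
next
  case (c_AppR u u' t) then show ?case by (auto simp: typ_App)
next
  case (c_PairL t t' u) then show ?case by (auto simp: typ_Pair)
next
  case (c_PairR u u' t) then show ?case by (auto simp: typ_Pair)
next
  case (c_Fst t t') then show ?case by (auto simp: typ_Fst)
next
  case (c_Snd t t') then show ?case by (auto simp: typ_Snd)
next
  case (c_Inl t t') then show ?case by (auto simp: typ_Inl)
next
  case (c_Inr t t') then show ?case by (auto simp: typ_Inr)
next
  case (c_Match0 t t' u1 u2) then show ?case by (auto simp: typ_Match)
next
  case (c_Match1 u1 u1' t u2) then show ?case by (auto simp: typ_Match)
next
  case (c_Match2 u2 u2' t u1) then show ?case by (auto simp: typ_Match)
next
  case (c_Absurd t t') then show ?case by (auto simp: typ_Absurd)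
qed

lemma subject_reds: "beta\<^sup>*\<^sup>* t t' \<Longrightarrow> typing \<Gamma> t A \<Longrightarrow> typing \<Gamma> t' A"
  by (induct rule: rtranclp_induct) (auto intro: subject_red)

section \<open>Semantics\<close>

lemma tsubst_closed: "closed T \<Longrightarrow> tsubst M T = T"
  by (induct T) auto

lemma closed_tsubst: "model M \<Longrightarrow> closed (tsubst M T)"
  by (induct T) (auto simp: model_def)

lemma tsubst_idem: "model M \<Longrightarrow> tsubst M (tsubst M T) = tsubst M T"
  by (simp add: closed_tsubst tsubst_closed)

lemma fset_Abs: "finite S \<Longrightarrow> fset (Abs_fset S) = S"
  by (simp add: Abs_fset_inverse)

lemma finite_dom: "closed T \<Longrightarrow> finite (dom T)"
proof (induct T)
  case (Arr A B)
  have "dom (Arr A B) \<subseteq> (\<lambda>S. VFun (Abs_fset S)) ` Pow (dom A \<times> dom B)"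
  proof
    fix v assume "v \<in> dom (Arr A B)"
    then obtain g where g: "v = VFun g" "fst ` fset g = dom A" "snd ` fset g \<subseteq> dom B" by auto
    then have "fset g \<subseteq> dom A \<times> dom B" by force
    moreover have "v = VFun (Abs_fset (fset g))" using g by (simp add: fset_inverse)
    ultimately show "v \<in> (\<lambda>S. VFun (Abs_fset S)) ` Pow (dom A \<times> dom B)" by blast
  qed
  moreover have "finite (Pow (dom A \<times> dom B))" using Arr by simp
  ultimately show ?case by (meson finite_imageI finite_subset)
next
  case (Prod A B)
  have "dom (Prod A B) \<subseteq> (\<lambda>(a, b). VPair a b) ` (dom A \<times> dom B)" by auto
  then show ?case using Prod by (meson finite_SigmaI finite_imageI finite_subset closed.simps)
qed auto

lemma vapp_graph:
  assumes "finite D" "a \<in> D"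
  shows "vapp (VFun (Abs_fset ((\<lambda>x. (x, f x)) ` D))) a = f a"
proof -
  have e: "fset (Abs_fset ((\<lambda>x. (x, f x)) ` D)) = (\<lambda>x. (x, f x)) ` D"
    using assms(1) by (simp add: fset_Abs)
  show ?thesis unfolding vapp.simps e
    by (rule the_equality) (use assms(2) in auto)
qed

lemma graph_in_dom:
  assumes "finite (dom A)" "\<And>x. x \<in> dom A \<Longrightarrow> f x \<in> dom B"
  shows "VFun (Abs_fset ((\<lambda>x. (x, f x)) ` dom A)) \<in> dom (Arr A B)"
proof -
  have e: "fset (Abs_fset ((\<lambda>x. (x, f x)) ` dom A)) = (\<lambda>x. (x, f x)) ` dom A"
    using assms(1) by (simp add: fset_Abs)
  have "fst ` fset (Abs_fset ((\<lambda>x. (x, f x)) ` dom A)) = dom A" unfolding e by (simp add: image_image)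
  moreover have "snd ` fset (Abs_fset ((\<lambda>x. (x, f x)) ` dom A)) \<subseteq> dom B" unfolding e using assms(2) by auto
  moreover have "\<forall>a b b'. (a, b) \<in> fset (Abs_fset ((\<lambda>x. (x, f x)) ` dom A)) \<longrightarrow>
     (a, b') \<in> fset (Abs_fset ((\<lambda>x. (x, f x)) ` dom A)) \<longrightarrow> b = b'" unfolding e by auto
  ultimately show ?thesis by simp
qed

lemma vapp_in_graph:
  assumes "VFun g \<in> dom (Arr A B)" "a \<in> dom A"
  shows "(a, vapp (VFun g) a) \<in> fset g" "vapp (VFun g) a \<in> dom B"
proof -
  have P: "fst ` fset g = dom A" "snd ` fset g \<subseteq> dom B"
     "\<forall>a b b'. (a, b) \<in> fset g \<longrightarrow> (a, b') \<in> fset g \<longrightarrow> b = b'"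
    using assms(1) by simp_all
  have "a \<in> fst ` fset g" using assms(2) P(1) by simp
  then obtain b where b: "(a, b) \<in> fset g" by force
  have uniq: "\<And>b'. (a, b') \<in> fset g \<Longrightarrow> b' = b" using P(3) b by blast
  have vb: "vapp (VFun g) a = b" unfolding vapp.simps using b uniq by (rule the_equality)
  then show "(a, vapp (VFun g) a) \<in> fset g" using b by simp
  have "b \<in> snd ` fset g" using b by force
  then show "vapp (VFun g) a \<in> dom B" using vb P(2) by blast
qed

lemma vapp_dom: "f \<in> dom (Arr A B) \<Longrightarrow> a \<in> dom A \<Longrightarrow> vapp f a \<in> dom B"
  using vapp_in_graph(2) by auto

lemma env_dom_Cons:
  assumes "a \<in> dom (tsubst M A)" "\<rho> \<in> env_dom M \<Gamma>"
  shows "a # \<rho> \<in> env_dom M (A # \<Gamma>)"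
  unfolding env_dom_def
proof (intro CollectI conjI allI impI)
  show "length (a # \<rho>) = length (A # \<Gamma>)" using assms(2) by (simp add: env_dom_def)
  fix i assume "i < length (A # \<Gamma>)"
  then show "(a # \<rho>) ! i \<in> dom (tsubst M ((A # \<Gamma>) ! i))"
    using assms by (cases i) (simp_all add: env_dom_def)
qed

lemma sem_Lam_app:
  "finite (dom (tsubst M A)) \<Longrightarrow> a \<in> dom (tsubst M A) \<Longrightarrow> vapp (sem M (Lam A t) \<rho>) a = sem M t (a # \<rho>)"
  using vapp_graph[of "dom (tsubst M A)" a "\<lambda>a. sem M t (a # \<rho>)"] by simp

lemma sem_typed:
  "typing \<Gamma> t A \<Longrightarrow> model M \<Longrightarrow> \<rho> \<in> env_dom M \<Gamma> \<Longrightarrow> sem M t \<rho> \<in> dom (tsubst M A)"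
proof (induct arbitrary: \<rho> rule: typing.induct)
  case (T_Var i \<Gamma> A)
  then show ?case by (auto simp: env_dom_def)
next
  case (T_Lam A \<Gamma> t B)
  have "finite (dom (tsubst M A))" using T_Lam by (simp add: closed_tsubst finite_dom)
  then show ?case using graph_in_dom[of "tsubst M A" "\<lambda>a. sem M t (a # \<rho>)" "tsubst M B"] T_Lam
    by (simp add: env_dom_Cons)
next
  case (T_App \<Gamma> t A B u)
  then show ?case using vapp_dom[of "sem M t \<rho>" "tsubst M A" "tsubst M B"] by simp
next
  case (T_Match \<Gamma> t A1 A2 u1 C u2)
  then have "sem M t \<rho> \<in> VInl ` dom (tsubst M A1) \<union> VInr ` dom (tsubst M A2)" by simp
  then show ?case
  proof
    assume "sem M t \<rho> \<in> VInl ` dom (tsubst M A1)"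
    then obtain v where "sem M t \<rho> = VInl v" "v \<in> dom (tsubst M A1)" by blast
    then show ?thesis using T_Match by (simp add: env_dom_Cons)
  next
    assume "sem M t \<rho> \<in> VInr ` dom (tsubst M A2)"
    then obtain v where "sem M t \<rho> = VInr v" "v \<in> dom (tsubst M A2)" by blast
    then show ?thesis using T_Match by (simp add: env_dom_Cons)
  qed
next
  case (T_Absurd \<Gamma> t A)
  then show ?case using T_Absurd(2)[OF T_Absurd(3,4)] by simp
next
  case (T_Fst \<Gamma> t A B)
  from T_Fst(2)[OF T_Fst(3,4)] obtain a b where "sem M t \<rho> = VPair a b" "a \<in> dom (tsubst M A)" by auto
  then show ?case by simp
next
  case (T_Snd \<Gamma> t A B)
  from T_Snd(2)[OF T_Snd(3,4)] obtain a b where "sem M t \<rho> = VPair a b" "b \<in> dom (tsubst M B)" by auto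
  then show ?case by simp
qed auto

lemma sem_lift:
  "k \<le> length \<rho> \<Longrightarrow> sem M (lift t k) (take k \<rho> @ v # drop k \<rho>) = sem M t \<rho>"
proof (induct t arbitrary: k \<rho>)
  case (Var i)
  show ?case
  proof (cases "i < k")
    case True
    then show ?thesis using Var by (simp add: nth_append)
  next
    case False
    then have "(take k \<rho> @ v # drop k \<rho>) ! Suc i = (v # drop k \<rho>) ! (Suc i - k)"
      using Var by (simp add: nth_append)
    also have "\<dots> = drop k \<rho> ! (i - k)" using False by (simp add: Suc_diff_le)
    also have "\<dots> = \<rho> ! i" using False Var by simp
    finally show ?thesis using False by simp
  qed
next
  case (Lam A t)
  have "sem M (lift t (Suc k)) (a # take k \<rho> @ v # drop k \<rho>) = sem M t (a # \<rho>)" for a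
    using Lam.hyps[of "Suc k" "a # \<rho>"] Lam.prems by simp
  then show ?case by simp
next
  case (Match t u1 u2)
  have h1: "sem M (lift u1 (Suc k)) (a # take k \<rho> @ v # drop k \<rho>) = sem M u1 (a # \<rho>)" for a
    using Match.hyps(2)[of "Suc k" "a # \<rho>"] Match.prems by simp
  have h2: "sem M (lift u2 (Suc k)) (a # take k \<rho> @ v # drop k \<rho>) = sem M u2 (a # \<rho>)" for a
    using Match.hyps(3)[of "Suc k" "a # \<rho>"] Match.prems by simp
  show ?case using Match h1 h2 by (simp split: val.split)
qed auto

lemma sem_lift0: "sem M (lift t 0) (v # \<rho>) = sem M t \<rho>"
  using sem_lift[of 0 \<rho> M t v] by simp

lemma sem_subst:
  "k \<le> length \<rho> \<Longrightarrow> sem M (subst t s k) \<rho> = sem M t (take k \<rho> @ sem M s \<rho> # drop k \<rho>)"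
proof (induct t arbitrary: k \<rho> s)
  case (Var i)
  show ?case
  proof (cases "i < k")
    case True
    then show ?thesis using Var by (simp add: nth_append)
  next
    case False
    show ?thesis
    proof (cases "i = k")
      case True
      then show ?thesis using Var by (simp add: nth_append)
    next
      case False2: False
      then obtain j where j: "i = Suc j" "k \<le> j" using False by (cases i) auto
      have "(take k \<rho> @ sem M s \<rho> # drop k \<rho>) ! i = (sem M s \<rho> # drop k \<rho>) ! (Suc j - k)"
        using Var j by (simp add: nth_append)
      also have "\<dots> = drop k \<rho> ! (j - k)" using j by (simp add: Suc_diff_le)
      also have "\<dots> = \<rho> ! j" using j Var by simp
      finally show ?thesis using j by simp
    qed
  qed
next
  case (Lam A t)
  have "sem M (subst t (lift s 0) (Suc k)) (a # \<rho>) = sem M t (a # take k \<rho> @ sem M s \<rho> # drop k \<rho>)" for a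
    using Lam.hyps[of "Suc k" "a # \<rho>" "lift s 0"] Lam.prems by (simp add: sem_lift0)
  then show ?case by simp
next
  case (Match t u1 u2)
  have h1: "sem M (subst u1 (lift s 0) (Suc k)) (a # \<rho>) = sem M u1 (a # take k \<rho> @ sem M s \<rho> # drop k \<rho>)" for a
    using Match.hyps(2)[of "Suc k" "a # \<rho>" "lift s 0"] Match.prems by (simp add: sem_lift0)
  have h2: "sem M (subst u2 (lift s 0) (Suc k)) (a # \<rho>) = sem M u2 (a # take k \<rho> @ sem M s \<rho> # drop k \<rho>)" for a
    using Match.hyps(3)[of "Suc k" "a # \<rho>" "lift s 0"] Match.prems by (simp add: sem_lift0)
  show ?case using Match h1 h2 by (simp split: val.split)
qed auto

lemma sem_subst0: "sem M (subst t s 0) \<rho> = sem M t (sem M s \<rho> # \<rho>)"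
  using sem_subst[of 0 \<rho> M t s] by simp

lemma fin_dom_M: "model M \<Longrightarrow> finite (dom (tsubst M A))"
  by (simp add: closed_tsubst finite_dom)

lemma beta_sound:
  "beta t t' \<Longrightarrow> typing \<Gamma> t A \<Longrightarrow> model M \<Longrightarrow> \<rho> \<in> env_dom M \<Gamma> \<Longrightarrow> sem M t \<rho> = sem M t' \<rho>"
proof (induct arbitrary: \<Gamma> A \<rho> rule: beta.induct)
  case (b_Lam B t u)
  then obtain C where "typing (C # \<Gamma>) t A" "typing \<Gamma> u C" "B = C"
    by (auto simp: typ_App typ_Lam)
  then have "sem M u \<rho> \<in> dom (tsubst M B)" using b_Lam sem_typed by blast
  then have "sem M (App (Lam B t) u) \<rho> = sem M t (sem M u \<rho> # \<rho>)"
    using sem_Lam_app[OF fin_dom_M[OF b_Lam(2)]] by simp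
  then show ?case by (simp add: sem_subst0)
next
  case (b_Inl t u1 u2)
  then show ?case by (simp add: sem_subst0)
next
  case (b_Inr t u1 u2)
  then show ?case by (simp add: sem_subst0)
next
  case (c_Lam t t' B)
  then obtain C where C: "typing (B # \<Gamma>) t C" by (auto simp: typ_Lam)
  have "(\<lambda>a. (a, sem M t (a # \<rho>))) ` dom (tsubst M B) = (\<lambda>a. (a, sem M t' (a # \<rho>))) ` dom (tsubst M B)"
  proof (rule image_cong)
    fix a assume "a \<in> dom (tsubst M B)"
    then have "a # \<rho> \<in> env_dom M (B # \<Gamma>)" using c_Lam env_dom_Cons by blast
    then show "(a, sem M t (a # \<rho>)) = (a, sem M t' (a # \<rho>))" using c_Lam(2)[OF C] c_Lam by simp
  qed simp
  then show ?case by simp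
next
  case (c_AppL t t' u)
  then obtain B where "typing \<Gamma> t (Arr B A)" by (auto simp: typ_App)
  then show ?case using c_AppL by simp
next
  case (c_AppR u u' t)
  then obtain B where "typing \<Gamma> u B" by (auto simp: typ_App)
  then show ?case using c_AppR by simp
next
  case (c_PairL t t' u)
  then obtain B where "typing \<Gamma> t B" by (auto simp: typ_Pair)
  then show ?case using c_PairL by simp
next
  case (c_PairR u u' t)
  then obtain B where "typing \<Gamma> u B" by (auto simp: typ_Pair)
  then show ?case using c_PairR by simp
next
  case (c_Fst t t')
  then obtain B where "typing \<Gamma> t B" by (auto simp: typ_Fst)
  then show ?case using c_Fst by simp
next
  case (c_Snd t t')
  then obtain B where "typing \<Gamma> t B" by (auto simp: typ_Snd)
  then show ?case using c_Snd by simp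
next
  case (c_Inl t t')
  then obtain B where "typing \<Gamma> t B" by (auto simp: typ_Inl)
  then show ?case using c_Inl by simp
next
  case (c_Inr t t')
  then obtain B where "typing \<Gamma> t B" by (auto simp: typ_Inr)
  then show ?case using c_Inr by simp
next
  case (c_Match0 t t' u1 u2)
  then obtain B where "typing \<Gamma> t B" by (auto simp: typ_Match)
  then show ?case using c_Match0 by simp
next
  case (c_Match1 u1 u1' t u2)
  then obtain A1 A2 where T: "typing \<Gamma> t (Sum A1 A2)" "typing (A1 # \<Gamma>) u1 A" by (auto simp: typ_Match)
  then have "sem M t \<rho> \<in> VInl ` dom (tsubst M A1) \<union> VInr ` dom (tsubst M A2)"
    using sem_typed c_Match1 by fastforce
  then show ?case
  proof
    assume "sem M t \<rho> \<in> VInl ` dom (tsubst M A1)"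
    then obtain v where v: "sem M t \<rho> = VInl v" "v \<in> dom (tsubst M A1)" by blast
    then have "v # \<rho> \<in> env_dom M (A1 # \<Gamma>)" using c_Match1 env_dom_Cons by blast
    then show ?thesis using v c_Match1(2)[OF T(2)] c_Match1 by simp
  next
    assume "sem M t \<rho> \<in> VInr ` dom (tsubst M A2)"
    then obtain v where v: "sem M t \<rho> = VInr v" by blast
    then show ?thesis by simp
  qed
next
  case (c_Match2 u2 u2' t u1)
  then obtain A1 A2 where T: "typing \<Gamma> t (Sum A1 A2)" "typing (A2 # \<Gamma>) u2 A" by (auto simp: typ_Match)
  then have "sem M t \<rho> \<in> VInl ` dom (tsubst M A1) \<union> VInr ` dom (tsubst M A2)"
    using sem_typed c_Match2 by fastforce
  then show ?case
  proof
    assume "sem M t \<rho> \<in> VInr ` dom (tsubst M A2)"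
    then obtain v where v: "sem M t \<rho> = VInr v" "v \<in> dom (tsubst M A2)" by blast
    then have "v # \<rho> \<in> env_dom M (A2 # \<Gamma>)" using c_Match2 env_dom_Cons by blast
    then show ?thesis using v c_Match2(2)[OF T(2)] c_Match2 by simp
  next
    assume "sem M t \<rho> \<in> VInl ` dom (tsubst M A1)"
    then obtain v where v: "sem M t \<rho> = VInl v" by blast
    then show ?thesis by simp
  qed
qed simp_all

lemma betas_sound:
  "beta\<^sup>*\<^sup>* t t' \<Longrightarrow> typing \<Gamma> t A \<Longrightarrow> model M \<Longrightarrow> \<rho> \<in> env_dom M \<Gamma> \<Longrightarrow> sem M t \<rho> = sem M t' \<rho>"
proof (induct rule: rtranclp_induct)
  case base
  then show ?case by simp
next
  case (step y z)
  then have "typing \<Gamma> y A" using subject_reds by blast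
  then show ?case using step beta_sound by metis
qed

section \<open>Definability in closed types\<close>

abbreviation Bool :: ty where "Bool \<equiv> Sum One One"
abbreviation tt :: val where "tt \<equiv> VInl VUnit"
abbreviation ff :: val where "ff \<equiv> VInr VUnit"
abbreviation TT :: trm where "TT \<equiv> Inl Unit"
abbreviation FF :: trm where "FF \<equiv> Inr Unit"

definition defin :: "(nat \<Rightarrow> ty) \<Rightarrow> ty \<Rightarrow> bool" where
  "defin M T \<longleftrightarrow> (\<forall>v\<in>dom T. \<exists>d. typing [] d T \<and> (\<forall>\<rho>. sem M d \<rho> = v))"

definition charac :: "(nat \<Rightarrow> ty) \<Rightarrow> ty \<Rightarrow> bool" where
  "charac M T \<longleftrightarrow> (\<forall>v\<in>dom T. \<exists>c. typing [] c (Arr T Bool) \<and>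
      (\<forall>\<rho> x. x \<in> dom T \<longrightarrow> vapp (sem M c \<rho>) x = (if x = v then tt else ff)))"

definition emptel :: "ty \<Rightarrow> bool" where
  "emptel T \<longleftrightarrow> (dom T = {} \<longrightarrow> (\<exists>e. typing [] e (Arr T Zero)))"

lemma sem_Lam_closed:
  "closed T \<Longrightarrow> x \<in> dom T \<Longrightarrow> vapp (sem M (Lam T b) \<rho>) x = sem M b (x # \<rho>)"
  using sem_Lam_app[of M T x b \<rho>] by (simp add: tsubst_closed finite_dom)

lemma typ_TT: "typing \<Gamma> TT Bool" by (rule T_Inl, rule T_Unit)
lemma typ_FF: "typing \<Gamma> FF Bool" by (rule T_Inr, rule T_Unit)

lemma graph_repr:
  assumes "VFun g \<in> dom (Arr A B)" "finite (dom A)" "\<And>x. x \<in> dom A \<Longrightarrow> f x = vapp (VFun g) x"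
  shows "VFun (Abs_fset ((\<lambda>x. (x, f x)) ` dom A)) = VFun g"
proof -
  have P: "fst ` fset g = dom A" "\<forall>a b b'. (a, b) \<in> fset g \<longrightarrow> (a, b') \<in> fset g \<longrightarrow> b = b'"
    using assms(1) by simp_all
  have "(\<lambda>x. (x, f x)) ` dom A = fset g"
  proof
    show "(\<lambda>x. (x, f x)) ` dom A \<subseteq> fset g"
      using vapp_in_graph(1)[OF assms(1)] assms(3) by auto
  next
    show "fset g \<subseteq> (\<lambda>x. (x, f x)) ` dom A"
    proof
      fix p assume p: "p \<in> fset g"
      obtain a b where ab: "p = (a, b)" by (cases p)
      have a: "a \<in> dom A" using P(1) p ab by force
      have "(a, vapp (VFun g) a) \<in> fset g" using vapp_in_graph(1)[OF assms(1) a] .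
      then have "b = vapp (VFun g) a" using P(2) p ab by blast
      then show "p \<in> (\<lambda>x. (x, f x)) ` dom A" using a ab assms(3) by force
    qed
  qed
  then show ?thesis by (simp add: fset_inverse)
qed

lemma fun_ext_dom:
  assumes "f \<in> dom (Arr A B)" "h \<in> dom (Arr A B)" "finite (dom A)"
    "\<And>x. x \<in> dom A \<Longrightarrow> vapp f x = vapp h x"
  shows "f = h"
proof -
  obtain gf where gf: "f = VFun gf" using assms(1) by auto
  obtain gh where gh: "h = VFun gh" using assms(2) by auto
  have "VFun (Abs_fset ((\<lambda>x. (x, vapp h x)) ` dom A)) = f"
    using graph_repr[of gf A B "\<lambda>x. vapp h x"] assms gf by simp
  moreover have "VFun (Abs_fset ((\<lambda>x. (x, vapp h x)) ` dom A)) = h"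
    using graph_repr[of gh A B "\<lambda>x. vapp h x"] assms gh by simp
  ultimately show ?thesis by simp
qed

lemma defs_One: "defin M One \<and> charac M One \<and> emptel One"
proof (intro conjI)
  show "defin M One" unfolding defin_def by (auto intro!: exI[of _ Unit] T_Unit)
  show "emptel One" unfolding emptel_def by simp
  show "charac M One" unfolding charac_def
  proof
    fix v assume v: "v \<in> dom One"
    have "typing [] (Lam One TT) (Arr One Bool)" by (rule T_Lam, rule typ_TT)
    moreover have "\<forall>\<rho> x. x \<in> dom One \<longrightarrow> vapp (sem M (Lam One TT) \<rho>) x = (if x = v then tt else ff)"
    proof (intro allI impI)
      fix \<rho> x assume x: "x \<in> dom One"
      have "vapp (sem M (Lam One TT) \<rho>) x = sem M TT (x # \<rho>)"
        by (rule sem_Lam_closed) (use x in simp_all)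
      then show "vapp (sem M (Lam One TT) \<rho>) x = (if x = v then tt else ff)" using x v by simp
    qed
    ultimately show "\<exists>c. typing [] c (Arr One Bool) \<and>
      (\<forall>\<rho> x. x \<in> dom One \<longrightarrow> vapp (sem M c \<rho>) x = (if x = v then tt else ff))" by blast
  qed
qed

lemma defs_Zero: "defin M Zero \<and> charac M Zero \<and> emptel Zero"
proof (intro conjI)
  show "defin M Zero" unfolding defin_def by simp
  show "charac M Zero" unfolding charac_def by simp
  have "typing [] (Lam Zero (Var 0)) (Arr Zero Zero)" by (rule T_Lam, rule T_Var) simp_all
  then show "emptel Zero" unfolding emptel_def by blast
qed

lemma defs_Prod:
  assumes cA: "closed A" and cB: "closed B"
    and IA: "defin M A \<and> charac M A \<and> emptel A" and IB: "defin M B \<and> charac M B \<and> emptel B"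
  shows "defin M (Prod A B) \<and> charac M (Prod A B) \<and> emptel (Prod A B)"
proof (intro conjI)
  show "defin M (Prod A B)" unfolding defin_def
  proof
    fix v assume "v \<in> dom (Prod A B)"
    then obtain a b where v: "v = VPair a b" "a \<in> dom A" "b \<in> dom B" by auto
    obtain da where da: "typing [] da A" "\<forall>\<rho>. sem M da \<rho> = a" using IA v unfolding defin_def by blast
    obtain db where db: "typing [] db B" "\<forall>\<rho>. sem M db \<rho> = b" using IB v unfolding defin_def by blast
    have "typing [] (Pair da db) (Prod A B)" using da db by (simp add: T_Pair)
    then show "\<exists>d. typing [] d (Prod A B) \<and> (\<forall>\<rho>. sem M d \<rho> = v)" using da db v by auto
  qed
  show "charac M (Prod A B)" unfolding charac_def
  proof
    fix v assume "v \<in> dom (Prod A B)"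
    then obtain a b where v: "v = VPair a b" "a \<in> dom A" "b \<in> dom B" by auto
    obtain ca where ca: "typing [] ca (Arr A Bool)"
      "\<forall>\<rho> x. x \<in> dom A \<longrightarrow> vapp (sem M ca \<rho>) x = (if x = a then tt else ff)"
      using IA v unfolding charac_def by blast
    obtain cb where cb: "typing [] cb (Arr B Bool)"
      "\<forall>\<rho> x. x \<in> dom B \<longrightarrow> vapp (sem M cb \<rho>) x = (if x = b then tt else ff)"
      using IB v unfolding charac_def by blast
    define c where "c = Lam (Prod A B) (Match (App ca (Fst (Var 0))) (App cb (Snd (Var (Suc 0)))) FF)"
    have "typing [] c (Arr (Prod A B) Bool)"
      unfolding c_def
      apply (rule T_Lam)
      apply (rule T_Match[of _ _ One One])
        apply (rule T_App[where A=A])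
         apply (rule typing_closed[OF ca(1)])
        apply (rule T_Fst[where B=B])
        apply (rule T_Var; simp)
       apply (rule T_App[where A=B])
        apply (rule typing_closed[OF cb(1)])
       apply (rule T_Snd[where A=A])
       apply (rule T_Var; simp)
      apply (rule typ_FF)
      done
    moreover have "\<forall>\<rho> x. x \<in> dom (Prod A B) \<longrightarrow> vapp (sem M c \<rho>) x = (if x = v then tt else ff)"
    proof (intro allI impI)
      fix \<rho> x assume x: "x \<in> dom (Prod A B)"
      then obtain x1 x2 where xx: "x = VPair x1 x2" "x1 \<in> dom A" "x2 \<in> dom B" by auto
      have "vapp (sem M c \<rho>) x = sem M (Match (App ca (Fst (Var 0))) (App cb (Snd (Var (Suc 0)))) FF) (x # \<rho>)"
        unfolding c_def by (rule sem_Lam_closed) (use cA cB x in simp_all)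
      also have "\<dots> = (if x = v then tt else ff)"
        using ca(2) cb(2) xx v by simp
      finally show "vapp (sem M c \<rho>) x = (if x = v then tt else ff)" .
    qed
    ultimately show "\<exists>c. typing [] c (Arr (Prod A B) Bool) \<and>
      (\<forall>\<rho> x. x \<in> dom (Prod A B) \<longrightarrow> vapp (sem M c \<rho>) x = (if x = v then tt else ff))" by blast
  qed
  show "emptel (Prod A B)" unfolding emptel_def
  proof
    assume e: "dom (Prod A B) = {}"
    show "\<exists>e. typing [] e (Arr (Prod A B) Zero)"
    proof (cases "dom A = {}")
      case True
      then obtain eA where eA: "typing [] eA (Arr A Zero)" using IA unfolding emptel_def by blast
      have "typing [] (Lam (Prod A B) (App eA (Fst (Var 0)))) (Arr (Prod A B) Zero)"
        apply (rule T_Lam)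
        apply (rule T_App[where A=A])
         apply (rule typing_closed[OF eA])
        apply (rule T_Fst[where B=B])
        apply (rule T_Var; simp)
        done
      then show ?thesis by blast
    next
      case False
      then have "dom B = {}" using e by auto
      then obtain eB where eB: "typing [] eB (Arr B Zero)" using IB unfolding emptel_def by blast
      have "typing [] (Lam (Prod A B) (App eB (Snd (Var 0)))) (Arr (Prod A B) Zero)"
        apply (rule T_Lam)
        apply (rule T_App[where A=B])
         apply (rule typing_closed[OF eB])
        apply (rule T_Snd[where A=A])
        apply (rule T_Var; simp)
        done
      then show ?thesis by blast
    qed
  qed
qed

lemma defs_Sum:
  assumes cA: "closed A" and cB: "closed B"
    and IA: "defin M A \<and> charac M A \<and> emptel A" and IB: "defin M B \<and> charac M B \<and> emptel B"
  shows "defin M (Sum A B) \<and> charac M (Sum A B) \<and> emptel (Sum A B)"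
proof (intro conjI)
  show "defin M (Sum A B)" unfolding defin_def
  proof
    fix v assume "v \<in> dom (Sum A B)"
    then consider a where "v = VInl a" "a \<in> dom A" | b where "v = VInr b" "b \<in> dom B" by auto
    then show "\<exists>d. typing [] d (Sum A B) \<and> (\<forall>\<rho>. sem M d \<rho> = v)"
    proof cases
      case (1 a)
      obtain da where da: "typing [] da A" "\<forall>\<rho>. sem M da \<rho> = a" using IA 1 unfolding defin_def by blast
      have "typing [] (Inl da) (Sum A B)" using da by (simp add: T_Inl)
      then show ?thesis using da 1 by auto
    next
      case (2 b)
      obtain db where db: "typing [] db B" "\<forall>\<rho>. sem M db \<rho> = b" using IB 2 unfolding defin_def by blast
      have "typing [] (Inr db) (Sum A B)" using db by (simp add: T_Inr)
      then show ?thesis using db 2 by auto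
    qed
  qed
  show "charac M (Sum A B)" unfolding charac_def
  proof
    fix v assume "v \<in> dom (Sum A B)"
    then consider a where "v = VInl a" "a \<in> dom A" | b where "v = VInr b" "b \<in> dom B" by auto
    then show "\<exists>c. typing [] c (Arr (Sum A B) Bool) \<and>
      (\<forall>\<rho> x. x \<in> dom (Sum A B) \<longrightarrow> vapp (sem M c \<rho>) x = (if x = v then tt else ff))"
    proof cases
      case (1 a)
      obtain ca where ca: "typing [] ca (Arr A Bool)"
        "\<forall>\<rho> x. x \<in> dom A \<longrightarrow> vapp (sem M ca \<rho>) x = (if x = a then tt else ff)"
        using IA 1 unfolding charac_def by blast
      define c where "c = Lam (Sum A B) (Match (Var 0) (App ca (Var 0)) FF)"
      have "typing [] c (Arr (Sum A B) Bool)"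
        unfolding c_def
        apply (rule T_Lam)
        apply (rule T_Match[of _ _ A B])
          apply (rule T_Var; simp)
         apply (rule T_App[where A=A])
          apply (rule typing_closed[OF ca(1)])
         apply (rule T_Var; simp)
        apply (rule typ_FF)
        done
      moreover have "\<forall>\<rho> x. x \<in> dom (Sum A B) \<longrightarrow> vapp (sem M c \<rho>) x = (if x = v then tt else ff)"
      proof (intro allI impI)
        fix \<rho> x assume x: "x \<in> dom (Sum A B)"
        have "vapp (sem M c \<rho>) x = sem M (Match (Var 0) (App ca (Var 0)) FF) (x # \<rho>)"
          unfolding c_def by (rule sem_Lam_closed) (use cA cB x in simp_all)
        also have "\<dots> = (if x = v then tt else ff)"
        proof -
          have va: "v = VInl a" using 1 by simp
          from x consider y where "x = VInl y" "y \<in> dom A" | y where "x = VInr y" by auto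
          then show ?thesis
          proof cases
            case (1 y)
            then have "vapp (sem M ca (y # x # \<rho>)) y = (if y = a then tt else ff)" using ca(2) by blast
            then show ?thesis using 1 va by simp
          next
            case (2 y)
            then show ?thesis using va by simp
          qed
        qed
        finally show "vapp (sem M c \<rho>) x = (if x = v then tt else ff)" .
      qed
      ultimately show ?thesis by blast
    next
      case (2 b)
      obtain cb where cb: "typing [] cb (Arr B Bool)"
        "\<forall>\<rho> x. x \<in> dom B \<longrightarrow> vapp (sem M cb \<rho>) x = (if x = b then tt else ff)"
        using IB 2 unfolding charac_def by blast
      define c where "c = Lam (Sum A B) (Match (Var 0) FF (App cb (Var 0)))"
      have "typing [] c (Arr (Sum A B) Bool)"
        unfolding c_def
        apply (rule T_Lam)
        apply (rule T_Match[of _ _ A B])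
          apply (rule T_Var; simp)
         apply (rule typ_FF)
        apply (rule T_App[where A=B])
         apply (rule typing_closed[OF cb(1)])
        apply (rule T_Var; simp)
        done
      moreover have "\<forall>\<rho> x. x \<in> dom (Sum A B) \<longrightarrow> vapp (sem M c \<rho>) x = (if x = v then tt else ff)"
      proof (intro allI impI)
        fix \<rho> x assume x: "x \<in> dom (Sum A B)"
        have "vapp (sem M c \<rho>) x = sem M (Match (Var 0) FF (App cb (Var 0))) (x # \<rho>)"
          unfolding c_def by (rule sem_Lam_closed) (use cA cB x in simp_all)
        also have "\<dots> = (if x = v then tt else ff)"
        proof -
          have va: "v = VInr b" using 2 by simp
          from x consider y where "x = VInr y" "y \<in> dom B" | y where "x = VInl y" by auto
          then show ?thesis
          proof cases
            case (1 y)
            then have "vapp (sem M cb (y # x # \<rho>)) y = (if y = b then tt else ff)" using cb(2) by blast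
            then show ?thesis using 1 va by simp
          next
            case (2 y)
            then show ?thesis using va by simp
          qed
        qed
        finally show "vapp (sem M c \<rho>) x = (if x = v then tt else ff)" .
      qed
      ultimately show ?thesis by blast
    qed
  qed
  show "emptel (Sum A B)" unfolding emptel_def
  proof
    assume e: "dom (Sum A B) = {}"
    then have "dom A = {}" "dom B = {}" by auto
    then obtain eA eB where eA: "typing [] eA (Arr A Zero)" and eB: "typing [] eB (Arr B Zero)"
      using IA IB unfolding emptel_def by blast
    have "typing [] (Lam (Sum A B) (Match (Var 0) (App eA (Var 0)) (App eB (Var 0)))) (Arr (Sum A B) Zero)"
      apply (rule T_Lam)
      apply (rule T_Match[of _ _ A B])
        apply (rule T_Var; simp)
       apply (rule T_App[where A=A])
        apply (rule typing_closed[OF eA])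
       apply (rule T_Var; simp)
      apply (rule T_App[where A=B])
       apply (rule typing_closed[OF eB])
      apply (rule T_Var; simp)
      done
    then show "\<exists>e. typing [] e (Arr (Sum A B) Zero)" by blast
  qed
qed

primrec selT :: "(val \<Rightarrow> trm) \<Rightarrow> (val \<Rightarrow> trm) \<Rightarrow> val list \<Rightarrow> trm" where
  "selT ch dv [] = Unit"
| "selT ch dv (c # cs) = (if cs = [] then dv c else Match (App (ch c) (Var 0)) (dv c) (lift (selT ch dv cs) 0))"

lemma selT_typing:
  "cs \<noteq> [] \<Longrightarrow> (\<forall>c\<in>set cs. typing [] (ch c) (Arr A Bool) \<and> typing [] (dv c) B) \<Longrightarrow> typing [A] (selT ch dv cs) B"
proof (induct cs)
  case Nil
  then show ?case by simp
next
  case (Cons c cs)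
  show ?case
  proof (cases "cs = []")
    case True
    then show ?thesis using Cons by (simp add: typing_closed)
  next
    case False
    then have IH: "typing [A] (selT ch dv cs) B" using Cons by simp
    have c: "typing [] (ch c) (Arr A Bool)" "typing [] (dv c) B" using Cons by auto
    show ?thesis using False
      apply simp
      apply (rule T_Match[of _ _ One One])
        apply (rule T_App[where A=A])
         apply (rule typing_closed[OF c(1)])
        apply (rule T_Var; simp)
       apply (rule typing_closed[OF c(2)])
      apply (rule typing_lift0[OF IH])
      done
  qed
qed

lemma selT_sem:
  "x \<in> set cs \<Longrightarrow> x \<in> dom A \<Longrightarrow>
   (\<forall>c\<in>set cs. \<forall>\<rho> y. y \<in> dom A \<longrightarrow> vapp (sem M (ch c) \<rho>) y = (if y = c then tt else ff)) \<Longrightarrow>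
   (\<forall>c\<in>set cs. \<forall>\<rho>. sem M (dv c) \<rho> = val c) \<Longrightarrow>
   sem M (selT ch dv cs) (x # \<rho>) = val x"
proof (induct cs)
  case Nil
  then show ?case by simp
next
  case (Cons c cs)
  show ?case
  proof (cases "cs = []")
    case True
    then show ?thesis using Cons by simp
  next
    case False
    have "\<forall>\<rho> y. y \<in> dom A \<longrightarrow> vapp (sem M (ch c) \<rho>) y = (if y = c then tt else ff)"
      using Cons.prems(3) by simp
    then have ch: "vapp (sem M (ch c) (x # \<rho>)) x = (if x = c then tt else ff)" using Cons.prems(2) by blast
    show ?thesis
    proof (cases "x = c")
      case True
      then show ?thesis using False ch Cons by simp
    next
      case False2: False
      then have "sem M (selT ch dv cs) (x # \<rho>) = val x" using Cons by simp
      then show ?thesis using False False2 ch by (simp add: sem_lift0)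
    qed
  qed
qed

primrec conjT :: "(val \<Rightarrow> trm) \<Rightarrow> (val \<Rightarrow> trm) \<Rightarrow> val list \<Rightarrow> trm" where
  "conjT cb da [] = TT"
| "conjT cb da (c # cs) = Match (App (cb c) (App (Var 0) (da c))) (lift (conjT cb da cs) 0) FF"

lemma conjT_typing:
  "(\<forall>c\<in>set cs. typing [] (cb c) (Arr B Bool) \<and> typing [] (da c) A) \<Longrightarrow> typing [Arr A B] (conjT cb da cs) Bool"
proof (induct cs)
  case Nil
  then show ?case by (simp add: typ_TT)
next
  case (Cons c cs)
  then have IH: "typing [Arr A B] (conjT cb da cs) Bool" by simp
  have c: "typing [] (cb c) (Arr B Bool)" "typing [] (da c) A" using Cons by auto
  show ?case
    apply simp
    apply (rule T_Match[of _ _ One One])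
      apply (rule T_App[where A=B])
       apply (rule typing_closed[OF c(1)])
      apply (rule T_App[where A=A])
       apply (rule T_Var; simp)
      apply (rule typing_closed[OF c(2)])
     apply (rule typing_lift0[OF IH])
    apply (rule typ_FF)
    done
qed

lemma conjT_sem:
  "f \<in> dom (Arr A B) \<Longrightarrow> set cs \<subseteq> dom A \<Longrightarrow>
   (\<forall>c\<in>set cs. \<forall>\<rho>. sem M (da c) \<rho> = c) \<Longrightarrow>
   (\<forall>c\<in>set cs. \<forall>\<rho> y. y \<in> dom B \<longrightarrow> vapp (sem M (cb c) \<rho>) y = (if y = gv c then tt else ff)) \<Longrightarrow>
   sem M (conjT cb da cs) (f # \<rho>) = (if (\<forall>c\<in>set cs. vapp f c = gv c) then tt else ff)"
proof (induct cs)
  case Nil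
  then show ?case by simp
next
  case (Cons c cs)
  have fc: "vapp f c \<in> dom B" using Cons vapp_dom by auto
  have "\<forall>\<rho> y. y \<in> dom B \<longrightarrow> vapp (sem M (cb c) \<rho>) y = (if y = gv c then tt else ff)"
    using Cons.prems(4) by simp
  then have cb: "vapp (sem M (cb c) (f # \<rho>)) (vapp f c) = (if vapp f c = gv c then tt else ff)"
    using fc by blast
  have da: "sem M (da c) (f # \<rho>) = c" using Cons by simp
  have IH: "sem M (conjT cb da cs) (f # \<rho>) = (if (\<forall>c\<in>set cs. vapp f c = gv c) then tt else ff)"
    using Cons by simp
  show ?case using cb da IH by (simp add: sem_lift0)
qed

lemma defs_Arr:
  assumes cA: "closed A" and cB: "closed B"
    and IA: "defin M A \<and> charac M A \<and> emptel A" and IB: "defin M B \<and> charac M B \<and> emptel B"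
  shows "defin M (Arr A B) \<and> charac M (Arr A B) \<and> emptel (Arr A B)"
proof -
  have fA: "finite (dom A)" using cA by (rule finite_dom)
  have cAB: "closed (Arr A B)" using cA cB by simp
  obtain cs where cs: "set cs = dom A" using finite_list[OF fA] by blast
  have "\<forall>c\<in>dom A. \<exists>d. typing [] d A \<and> (\<forall>\<rho>. sem M d \<rho> = c)" using IA unfolding defin_def by blast
  then obtain dA where dA: "\<forall>c\<in>dom A. typing [] (dA c) A \<and> (\<forall>\<rho>. sem M (dA c) \<rho> = c)"
    by (rule bchoice[THEN exE]) blast
  have "\<forall>c\<in>dom A. \<exists>d. typing [] d (Arr A Bool) \<and>
      (\<forall>\<rho> x. x \<in> dom A \<longrightarrow> vapp (sem M d \<rho>) x = (if x = c then tt else ff))"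
    using IA unfolding charac_def by blast
  then obtain chA where chA: "\<forall>c\<in>dom A. typing [] (chA c) (Arr A Bool) \<and>
      (\<forall>\<rho> x. x \<in> dom A \<longrightarrow> vapp (sem M (chA c) \<rho>) x = (if x = c then tt else ff))"
    by (rule bchoice[THEN exE]) blast
  have "\<forall>c\<in>dom B. \<exists>d. typing [] d B \<and> (\<forall>\<rho>. sem M d \<rho> = c)" using IB unfolding defin_def by blast
  then obtain dB where dB: "\<forall>c\<in>dom B. typing [] (dB c) B \<and> (\<forall>\<rho>. sem M (dB c) \<rho> = c)"
    by (rule bchoice[THEN exE]) blast
  have "\<forall>c\<in>dom B. \<exists>d. typing [] d (Arr B Bool) \<and>
      (\<forall>\<rho> x. x \<in> dom B \<longrightarrow> vapp (sem M d \<rho>) x = (if x = c then tt else ff))"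
    using IB unfolding charac_def by blast
  then obtain chB where chB: "\<forall>c\<in>dom B. typing [] (chB c) (Arr B Bool) \<and>
      (\<forall>\<rho> x. x \<in> dom B \<longrightarrow> vapp (sem M (chB c) \<rho>) x = (if x = c then tt else ff))"
    by (rule bchoice[THEN exE]) blast
  have D: "defin M (Arr A B)" unfolding defin_def
  proof
    fix v assume v: "v \<in> dom (Arr A B)"
    then obtain g where g: "v = VFun g" by auto
    show "\<exists>d. typing [] d (Arr A B) \<and> (\<forall>\<rho>. sem M d \<rho> = v)"
    proof (cases "dom A = {}")
      case True
      then obtain eA where eA: "typing [] eA (Arr A Zero)" using IA unfolding emptel_def by blast
      define d where "d = Lam A (Absurd (App eA (Var 0)))"
      have "typing [] d (Arr A B)"
        unfolding d_def
        apply (rule T_Lam)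
        apply (rule T_Absurd)
        apply (rule T_App[where A=A])
         apply (rule typing_closed[OF eA])
        apply (rule T_Var; simp)
        done
      moreover have "sem M d \<rho> = v" for \<rho>
      proof -
        have "sem M d \<rho> = VFun (Abs_fset ((\<lambda>a. (a, sem M (Absurd (App eA (Var 0))) (a # \<rho>))) ` dom A))"
          unfolding d_def using cA by (simp add: tsubst_closed)
        also have "\<dots> = v" unfolding g by (rule graph_repr) (use v g fA True in auto)
        finally show ?thesis .
      qed
      ultimately show ?thesis by blast
    next
      case False
      then have csne: "cs \<noteq> []" using cs by auto
      define dv where "dv = (\<lambda>c. dB (vapp v c))"
      define d where "d = Lam A (selT chA dv cs)"
      have vB: "\<And>c. c \<in> dom A \<Longrightarrow> vapp v c \<in> dom B" using v vapp_dom by blast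
      have "typing [] d (Arr A B)"
        unfolding d_def
        apply (rule T_Lam)
        apply (rule selT_typing[OF csne])
        using chA dB vB cs unfolding dv_def by auto
      moreover have "sem M d \<rho> = v" for \<rho>
      proof -
        have "sem M d \<rho> = VFun (Abs_fset ((\<lambda>a. (a, sem M (selT chA dv cs) (a # \<rho>))) ` dom A))"
          unfolding d_def using cA by (simp add: tsubst_closed)
        also have "\<dots> = v" unfolding g
        proof (rule graph_repr)
          show "VFun g \<in> dom (Arr A B)" using v g by simp
          show "finite (dom A)" by (rule fA)
          fix x assume x: "x \<in> dom A"
          show "sem M (selT chA dv cs) (x # \<rho>) = vapp (VFun g) x"
            by (rule selT_sem[where val="\<lambda>c. vapp (VFun g) c" and A=A])
              (use x cs chA dB vB g in \<open>auto simp: dv_def\<close>)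
        qed
        finally show ?thesis .
      qed
      ultimately show ?thesis by blast
    qed
  qed
  have C: "charac M (Arr A B)" unfolding charac_def
  proof
    fix v assume v: "v \<in> dom (Arr A B)"
    have vB: "\<And>c. c \<in> dom A \<Longrightarrow> vapp v c \<in> dom B" using v vapp_dom by blast
    define cb where "cb = (\<lambda>c. chB (vapp v c))"
    define c where "c = Lam (Arr A B) (conjT cb dA cs)"
    have "typing [] c (Arr (Arr A B) Bool)"
      unfolding c_def
      apply (rule T_Lam)
      apply (rule conjT_typing)
      using chB dA vB cs unfolding cb_def by auto
    moreover have "vapp (sem M c \<rho>) f = (if f = v then tt else ff)" if f: "f \<in> dom (Arr A B)" for \<rho> f
    proof -
      have "vapp (sem M c \<rho>) f = sem M (conjT cb dA cs) (f # \<rho>)"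
        unfolding c_def by (rule sem_Lam_closed) (use cAB f in simp_all)
      also have "\<dots> = (if (\<forall>c\<in>set cs. vapp f c = vapp v c) then tt else ff)"
        by (rule conjT_sem[where A=A and B=B]) (use f cs dA chB vB in \<open>auto simp: cb_def\<close>)
      also have "(\<forall>c\<in>set cs. vapp f c = vapp v c) \<longleftrightarrow> f = v"
        using fun_ext_dom[OF f v fA] cs by auto
      finally show ?thesis .
    qed
    ultimately show "\<exists>c. typing [] c (Arr (Arr A B) Bool) \<and>
      (\<forall>\<rho> x. x \<in> dom (Arr A B) \<longrightarrow> vapp (sem M c \<rho>) x = (if x = v then tt else ff))" by blast
  qed
  have E: "emptel (Arr A B)" unfolding emptel_def
  proof
    assume e: "dom (Arr A B) = {}"
    have neA: "dom A \<noteq> {}"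
    proof
      assume "dom A = {}"
      then have "VFun (Abs_fset ((\<lambda>x. (x, undefined)) ` dom A)) \<in> dom (Arr A B)"
        by (intro graph_in_dom) (use fA in auto)
      then show False using e by blast
    qed
    have eB: "dom B = {}"
    proof (rule ccontr)
      assume "dom B \<noteq> {}"
      then obtain b where b: "b \<in> dom B" by blast
      then have "VFun (Abs_fset ((\<lambda>x. (x, b)) ` dom A)) \<in> dom (Arr A B)"
        by (intro graph_in_dom) (use fA in auto)
      then show False using e by blast
    qed
    then obtain eB where eB': "typing [] eB (Arr B Zero)" using IB unfolding emptel_def by blast
    obtain a0 where a0: "a0 \<in> dom A" using neA by blast
    have da0: "typing [] (dA a0) A" using dA a0 by blast
    have "typing [] (Lam (Arr A B) (App eB (App (Var 0) (dA a0)))) (Arr (Arr A B) Zero)"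
      apply (rule T_Lam)
      apply (rule T_App[where A=B])
       apply (rule typing_closed[OF eB'])
      apply (rule T_App[where A=A])
       apply (rule T_Var; simp)
      apply (rule typing_closed[OF da0])
      done
    then show "\<exists>e. typing [] e (Arr (Arr A B) Zero)" by blast
  qed
  show ?thesis using D C E by blast
qed

lemma defs_all: "closed T \<Longrightarrow> defin M T \<and> charac M T \<and> emptel T"
proof (induct T)
  case (Atom X)
  then show ?case by simp
next
  case (Arr A B)
  then show ?case by (intro defs_Arr) auto
next
  case (Prod A B)
  then show ?case by (intro defs_Prod) auto
next
  case One
  show ?case by (rule defs_One)
next
  case (Sum A B)
  then show ?case by (intro defs_Sum) auto
next
  case Zero
  show ?case by (rule defs_Zero)
qed

lemma msubst_typing: "typing \<Gamma> t A \<Longrightarrow> typing (map (tsubst M) \<Gamma>) (msubst M t) (tsubst M A)"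
proof (induct rule: typing.induct)
  case (T_Var i \<Gamma> A)
  then show ?case by (simp add: typing.T_Var)
next
  case (T_Lam A \<Gamma> t B)
  then show ?case by (simp add: typing.T_Lam)
next
  case (T_App \<Gamma> t A B u)
  then show ?case by (simp add: typing.T_App[of _ _ "tsubst M A"])
next
  case (T_Pair \<Gamma> t A u B)
  then show ?case by (simp add: typing.T_Pair)
next
  case (T_Fst \<Gamma> t A B)
  then show ?case by (simp add: typing.T_Fst[of _ _ _ "tsubst M B"])
next
  case (T_Snd \<Gamma> t A B)
  then show ?case by (simp add: typing.T_Snd[of _ _ "tsubst M A"])
next
  case (T_Unit \<Gamma>)
  then show ?case by (simp add: typing.T_Unit)
next
  case (T_Inl \<Gamma> t A B)
  then show ?case by (simp add: typing.T_Inl)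
next
  case (T_Inr \<Gamma> t B A)
  then show ?case by (simp add: typing.T_Inr)
next
  case (T_Match \<Gamma> t A1 A2 u1 C u2)
  then show ?case by (simp add: typing.T_Match[of _ _ "tsubst M A1" "tsubst M A2"])
next
  case (T_Absurd \<Gamma> t A)
  then show ?case by (simp add: typing.T_Absurd)
qed

lemma sem_msubst: "model M \<Longrightarrow> sem M (msubst M t) \<rho> = sem M t \<rho>"
proof (induct t arbitrary: \<rho>)
  case (Lam A t)
  then show ?case by (simp add: tsubst_idem)
next
  case (Match t u1 u2)
  then show ?case by (simp split: val.split)
qed simp_all

lemma plug_typing: "ctyping \<Delta> C \<Gamma> A B \<Longrightarrow> typing \<Gamma> s A \<Longrightarrow> typing \<Delta> (plug C s) B"
proof (induct rule: ctyping.induct)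
  case (CT_Hole \<Gamma> A)
  then show ?case by simp
next
  case (CT_Lam A' \<Delta> C \<Gamma> A B)
  then show ?case by (simp add: T_Lam)
next
  case (CT_AppL \<Delta> C \<Gamma> A B1 B2 u)
  then show ?case by (simp add: T_App[of _ _ B1])
next
  case (CT_AppR \<Delta> t B1 B2 C \<Gamma> A)
  then show ?case by (simp add: T_App[of _ _ B1])
next
  case (CT_PairL \<Delta> C \<Gamma> A B1 u B2)
  then show ?case by (simp add: T_Pair)
next
  case (CT_PairR \<Delta> t B1 C \<Gamma> A B2)
  then show ?case by (simp add: T_Pair)
next
  case (CT_Fst \<Delta> C \<Gamma> A B1 B2)
  then show ?case by (simp add: T_Fst[of _ _ _ B2])
next
  case (CT_Snd \<Delta> C \<Gamma> A B1 B2)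
  then show ?case by (simp add: T_Snd[of _ _ B1])
next
  case (CT_Inl \<Delta> C \<Gamma> A B1 B2)
  then show ?case by (simp add: T_Inl)
next
  case (CT_Inr \<Delta> C \<Gamma> A B2 B1)
  then show ?case by (simp add: T_Inr)
next
  case (CT_Match0 \<Delta> C \<Gamma> A B1 B2 u1 D u2)
  then show ?case by (simp add: T_Match[of _ _ B1 B2])
next
  case (CT_Match1 \<Delta> t B1 B2 C \<Gamma> A D u2)
  then show ?case by (simp add: T_Match[of _ _ B1 B2])
next
  case (CT_Match2 \<Delta> t B1 B2 u1 D C \<Gamma> A)
  then show ?case by (simp add: T_Match[of _ _ B1 B2])
next
  case (CT_Absurd \<Delta> C \<Gamma> A B)
  then show ?case by (simp add: T_Absurd)
qed

primrec cl :: "(ty \<times> trm) list \<Rightarrow> ctx" where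
  "cl [] = Hole"
| "cl (p # ps) = CAppL (CLam (fst p) (cl ps)) (snd p)"

lemma cl_typing:
  "(\<forall>p\<in>set ps. typing [] (snd p) (fst p)) \<Longrightarrow> ctyping \<Delta> (cl ps) (rev (map fst ps) @ \<Delta>) A A"
proof (induct ps arbitrary: \<Delta>)
  case Nil
  then show ?case by (simp add: CT_Hole)
next
  case (Cons p ps)
  have IH: "ctyping (fst p # \<Delta>) (cl ps) (rev (map fst ps) @ fst p # \<Delta>) A A" using Cons by simp
  have d: "typing \<Delta> (snd p) (fst p)" using Cons typing_closed by simp
  have "ctyping \<Delta> (CLam (fst p) (cl ps)) (rev (map fst ps) @ fst p # \<Delta>) A (Arr (fst p) A)"
    using IH by (rule CT_Lam)
  then have "ctyping \<Delta> (cl (p # ps)) (rev (map fst ps) @ fst p # \<Delta>) A A"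
    using d by (simp add: CT_AppL)
  then show ?case by simp
qed

lemma cl_sem:
  "(\<forall>p\<in>set ps. closed (fst p) \<and> (\<forall>\<rho>. sem M (snd p) \<rho> = vf p) \<and> vf p \<in> dom (fst p))
   \<Longrightarrow> sem M (plug (cl ps) s) \<sigma> = sem M s (rev (map vf ps) @ \<sigma>)"
proof (induct ps arbitrary: \<sigma>)
  case Nil
  then show ?case by simp
next
  case (Cons p ps)
  have P: "closed (fst p)" "sem M (snd p) \<sigma> = vf p" "vf p \<in> dom (fst p)"
    using Cons.prems by simp_all
  have "sem M (plug (cl (p # ps)) s) \<sigma> = vapp (sem M (Lam (fst p) (plug (cl ps) s)) \<sigma>) (sem M (snd p) \<sigma>)"
    by (simp only: cl.simps plug.simps sem.simps(3))
  also have "\<dots> = sem M (plug (cl ps) s) (vf p # \<sigma>)"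
    unfolding P(2) by (rule sem_Lam_closed[OF P(1) P(3)])
  also have "\<dots> = sem M s (rev (map vf ps) @ vf p # \<sigma>)"
    by (rule Cons.hyps) (use Cons.prems in simp)
  finally show ?case by simp
qed

theorem mainTheorem6:
  assumes "typing \<Gamma> t A" and "typing \<Gamma> u A" and "ctx_equiv \<Gamma> t u A"
  shows "sem_equiv \<Gamma> t u"
  unfolding sem_equiv_def
proof (intro allI impI)
  fix M \<rho> assume M: "model M" and \<rho>: "\<rho> \<in> env_dom M \<Gamma>"
  show "sem M t \<rho> = sem M u \<rho>"
  proof (rule ccontr)
    assume ne: "sem M t \<rho> \<noteq> sem M u \<rho>"
    define \<Gamma>' where "\<Gamma>' = map (tsubst M) \<Gamma>"
    define A' where "A' = tsubst M A"
    define n where "n = length \<Gamma>"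
    have cA': "closed A'" unfolding A'_def using M by (rule closed_tsubst)
    have vt: "sem M t \<rho> \<in> dom A'" unfolding A'_def using sem_typed[OF assms(1) M \<rho>] .
    have vu: "sem M u \<rho> \<in> dom A'" unfolding A'_def using sem_typed[OF assms(2) M \<rho>] .
    obtain \<chi> where \<chi>: "typing [] \<chi> (Arr A' Bool)"
      "\<forall>\<sigma> x. x \<in> dom A' \<longrightarrow> vapp (sem M \<chi> \<sigma>) x = (if x = sem M t \<rho> then tt else ff)"
      using defs_all[OF cA', of M] vt unfolding charac_def by blast
    have lr: "length \<rho> = n" using \<rho> unfolding env_dom_def n_def by simp
    have "\<forall>i\<in>{..<n}. \<exists>d. typing [] d (\<Gamma>' ! i) \<and> (\<forall>\<sigma>. sem M d \<sigma> = \<rho> ! i)"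
    proof
      fix i assume i: "i \<in> {..<n}"
      have cl: "closed (\<Gamma>' ! i)" using i M unfolding \<Gamma>'_def n_def by (simp add: closed_tsubst)
      have "\<rho> ! i \<in> dom (\<Gamma>' ! i)" using i \<rho> unfolding \<Gamma>'_def n_def env_dom_def by simp
      then show "\<exists>d. typing [] d (\<Gamma>' ! i) \<and> (\<forall>\<sigma>. sem M d \<sigma> = \<rho> ! i)"
        using defs_all[OF cl, of M] unfolding defin_def by blast
    qed
    then obtain D where D: "\<forall>i\<in>{..<n}. typing [] (D i) (\<Gamma>' ! i) \<and> (\<forall>\<sigma>. sem M (D i) \<sigma> = \<rho> ! i)"
      by (rule bchoice[THEN exE]) blast
    define ps where "ps = rev (map (\<lambda>i. (\<Gamma>' ! i, D i)) [0..<n])"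
    define vf :: "ty \<times> trm \<Rightarrow> val" where "vf = (\<lambda>p. sem M (snd p) [])"
    have lG: "length \<Gamma>' = n" unfolding \<Gamma>'_def n_def by simp
    have fps: "rev (map fst ps) = \<Gamma>'"
    proof -
      have "rev (map fst ps) = map (\<lambda>i. \<Gamma>' ! i) [0..<n]" unfolding ps_def by (simp add: rev_map)
      also have "\<dots> = \<Gamma>'" using map_nth[of \<Gamma>'] lG by simp
      finally show ?thesis .
    qed
    have vps: "rev (map vf ps) = \<rho>"
    proof -
      have "rev (map vf ps) = map (\<lambda>i. sem M (D i) []) [0..<n]" unfolding ps_def vf_def by (simp add: rev_map)
      also have "\<dots> = map (\<lambda>i. \<rho> ! i) [0..<n]" using D by simp
      also have "\<dots> = \<rho>" using lr by (simp add: map_nth[of \<rho>, simplified lr])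
      finally show ?thesis .
    qed
    have pst: "\<forall>p\<in>set ps. typing [] (snd p) (fst p)" unfolding ps_def using D by auto
    have pss: "\<forall>p\<in>set ps. closed (fst p) \<and> (\<forall>\<sigma>. sem M (snd p) \<sigma> = vf p) \<and> vf p \<in> dom (fst p)"
    proof
      fix p assume "p \<in> set ps"
      then obtain i where i: "i < n" "p = (\<Gamma>' ! i, D i)" unfolding ps_def by auto
      have s1: "\<And>\<sigma>. sem M (D i) \<sigma> = \<rho> ! i" using D i by simp
      have c: "closed (\<Gamma>' ! i)" using i M lG unfolding \<Gamma>'_def by (simp add: closed_tsubst)
      have m: "\<rho> ! i \<in> dom (\<Gamma>' ! i)" using i \<rho> unfolding \<Gamma>'_def n_def env_dom_def by simp
      have vfp: "vf p = \<rho> ! i" unfolding vf_def i(2) using s1 by simp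
      show "closed (fst p) \<and> (\<forall>\<sigma>. sem M (snd p) \<sigma> = vf p) \<and> vf p \<in> dom (fst p)"
        unfolding vfp using c m s1 i(2) by simp
    qed
    define C where "C = CAppR \<chi> (cl ps)"
    have Cty: "ctyping [] C \<Gamma>' A' Bool"
    proof -
      have "ctyping [] (cl ps) (rev (map fst ps) @ []) A' A'" using pst by (rule cl_typing)
      then have "ctyping [] (cl ps) \<Gamma>' A' A'" using fps by simp
      then show ?thesis unfolding C_def using \<chi>(1) by (simp add: CT_AppR)
    qed
    have "beq (plug C (msubst M t)) (plug C (msubst M u))"
      using assms(3) M Cty unfolding ctx_equiv_def \<Gamma>'_def A'_def by blast
    then obtain c where c: "beta\<^sup>*\<^sup>* (plug C (msubst M t)) c" "beta\<^sup>*\<^sup>* (plug C (msubst M u)) c"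
      using church_rosser by blast
    have env0: "[] \<in> env_dom M []" by (simp add: env_dom_def)
    have semC: "sem M (plug C s) [] = vapp (sem M \<chi> []) (sem M s \<rho>)" for s
    proof -
      have "sem M (plug (cl ps) s) [] = sem M s (rev (map vf ps) @ [])" by (rule cl_sem[OF pss])
      then show ?thesis unfolding C_def using vps by simp
    qed
    have tyt: "typing [] (plug C (msubst M t)) Bool"
      using plug_typing[OF Cty] msubst_typing[OF assms(1)] unfolding \<Gamma>'_def A'_def by blast
    have tyu: "typing [] (plug C (msubst M u)) Bool"
      using plug_typing[OF Cty] msubst_typing[OF assms(2)] unfolding \<Gamma>'_def A'_def by blast
    have "sem M (plug C (msubst M t)) [] = sem M c []" using betas_sound[OF c(1) tyt M env0] .
    moreover have "sem M (plug C (msubst M u)) [] = sem M c []" using betas_sound[OF c(2) tyu M env0] .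
    moreover have "sem M (plug C (msubst M t)) [] = tt"
      using semC[of "msubst M t"] sem_msubst[OF M] \<chi>(2) vt by simp
    moreover have "sem M (plug C (msubst M u)) [] = ff"
      using semC[of "msubst M u"] sem_msubst[OF M] \<chi>(2) vu ne by simp
    ultimately have "tt = ff" by metis
    then show False by simp
  qed
qed

end
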